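(* In the setting of the context, there exist $M\ge1$ and $T>0$ such that for every $x\in\mathbb{R}^N$, $z_0\in\mathbb{R}^{N+1}$ and $t\in[0,T]$, $$\frac1M\langle\widetilde C(t)x,x\rangle\le\langle C(z_0;t)x,x\rangle\le M\langle\widetilde C(t)x,x\rangle$$ and $$\frac1M\det\widetilde C(t)\le\det C(z_0;t)\le M\det\widetilde C(t).$$
   Context: $N\ge1$, $1\le p_0\le N$; $B$ constant real $N\times N$ with block structure: integers $r\ge1$, $p_0\ge p_1\ge\dots\ge p_r\ge1$, $\sum p_k=N$; in blocks $(B^{(k,l)})_{k,l=0}^r$ of size $p_k\times p_l$, $B^{(k,k+1)}=B_{k+1}$ has rank $p_{k+1}$, $B^{(k,l)}=0$ for $l>k+1$, others arbitrary; $B_0$ is obtained from $B$ by replacing all blocks other than the $B^{(k,k+1)}$ by zero. $a_{ij}(z)$, $i,j\le p_0$, $z\in\mathbb{R}^{N+1}$, symmetric with $\Lambda^{-1}|\xi|^2\le\sum a_{ij}(z)\xi_i\xi_j\le\Lambda|\xi|^2$, $\Lambda\ge1$. $A(z_0)$: $N\times N$ matrix with upper-left block $(a_{ij}(z_0))$, zeros elsewhere; $\mathcal I$: upper-left block $I_{p_0}$, zeros elsewhere. $E(s)=\exp(-sB^T)$, $E_0(s)=\exp(-sB_0^T)$, $C(z_0;t)=\int_0^tE(s)A(z_0)E(s)^Tds$, $\widetilde C(t)=\int_0^tE_0(s)\mathcal IE_0^T(s)ds$. *)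

theory Defs
  imports "HOL-Analysis.Analysis" "Jordan_Normal_Form.Determinant"
    "Jordan_Normal_Form.DL_Rank" "Jordan_Normal_Form.DL_Submatrix"
begin

text \<open>Matrices are Jordan_Normal_Form matrices (type real mat) of dimension N x N;
  indices run over 0..N-1. The blocks are indexed k = 0..r with sizes p k.\<close>

definition blk_off :: "(nat \<Rightarrow> nat) \<Rightarrow> nat \<Rightarrow> nat" where
  "blk_off p k = (\<Sum>j<k. p j)"

definition blk_idx :: "(nat \<Rightarrow> nat) \<Rightarrow> nat \<Rightarrow> nat set" where
  "blk_idx p k = {blk_off p k ..< blk_off p k + p k}"

definition blk :: "real mat \<Rightarrow> (nat \<Rightarrow> nat) \<Rightarrow> nat \<Rightarrow> nat \<Rightarrow> real mat" where
  "blk B p k l = submatrix B (blk_idx p k) (blk_idx p l)"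

definition block_structure :: "nat \<Rightarrow> real mat \<Rightarrow> nat \<Rightarrow> (nat \<Rightarrow> nat) \<Rightarrow> bool" where
  "block_structure N B r p \<longleftrightarrow>
     B \<in> carrier_mat N N \<and> r \<ge> 1 \<and> (\<forall>k<r. p (Suc k) \<le> p k) \<and> p r \<ge> 1 \<and>
     (\<Sum>k\<le>r. p k) = N \<and>
     (\<forall>k<r. vec_space.rank (p k) (blk B p k (Suc k)) = p (Suc k)) \<and>
     (\<forall>k\<le>r. \<forall>l\<le>r. Suc k < l \<longrightarrow> blk B p k l = 0\<^sub>m (p k) (p l))"

definition B0_of :: "nat \<Rightarrow> real mat \<Rightarrow> nat \<Rightarrow> (nat \<Rightarrow> nat) \<Rightarrow> real mat" where
  "B0_of N B r p = mat N N (\<lambda>(i,j).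
     if \<exists>k<r. i \<in> blk_idx p k \<and> j \<in> blk_idx p (Suc k) then B $$ (i,j) else 0)"

definition mat_exp :: "real mat \<Rightarrow> real mat" where
  "mat_exp A = mat (dim_row A) (dim_col A) (\<lambda>(i,j). \<Sum>m. (A ^\<^sub>m m) $$ (i,j) / fact m)"

definition Emat :: "real mat \<Rightarrow> real \<Rightarrow> real mat" where
  "Emat B s = mat_exp ((- s) \<cdot>\<^sub>m transpose_mat B)"

definition coef_mat :: "nat \<Rightarrow> nat \<Rightarrow> (nat \<Rightarrow> nat \<Rightarrow> 'z \<Rightarrow> real) \<Rightarrow> 'z \<Rightarrow> real mat" where
  "coef_mat N p0 a z0 = mat N N (\<lambda>(i,j). if i < p0 \<and> j < p0 then a i j z0 else 0)"

definition Ip0 :: "nat \<Rightarrow> nat \<Rightarrow> real mat" where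
  "Ip0 N p0 = mat N N (\<lambda>(i,j). if i < p0 \<and> i = j then 1 else 0)"

definition covar :: "nat \<Rightarrow> real mat \<Rightarrow> real mat \<Rightarrow> real \<Rightarrow> real mat" where
  "covar N B A t = mat N N (\<lambda>(i,j).
     integral {0..t} (\<lambda>s. (Emat B s * A * transpose_mat (Emat B s)) $$ (i,j)))"

definition Cmat :: "nat \<Rightarrow> real mat \<Rightarrow> nat \<Rightarrow> (nat \<Rightarrow> nat \<Rightarrow> 'z \<Rightarrow> real) \<Rightarrow> 'z \<Rightarrow> real \<Rightarrow> real mat" where
  "Cmat N B p0 a z0 t = covar N B (coef_mat N p0 a z0) t"

definition Ctilde :: "nat \<Rightarrow> real mat \<Rightarrow> nat \<Rightarrow> (nat \<Rightarrow> nat) \<Rightarrow> real \<Rightarrow> real mat" where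
  "Ctilde N B r p t = covar N (B0_of N B r p) (Ip0 N (p 0)) t"

end

theory Submission
  imports Defs "HOL-Computational_Algebra.Polynomial"
begin

fun pw :: "nat \<Rightarrow> (nat \<Rightarrow> nat \<Rightarrow> real) \<Rightarrow> nat \<Rightarrow> nat \<Rightarrow> nat \<Rightarrow> real" where
  "pw n F 0 i j = (if i = j then 1 else 0)"
| "pw n F (Suc m) i j = (\<Sum>l<n. pw n F m i l * F l j)"

lemma pw_Suc':
  assumes "i < n" "j < n"
  shows "pw n F (Suc m) i j = (\<Sum>l<n. F i l * pw n F m l j)"
  using assms
proof (induction m arbitrary: i j)
  case 0
  have "(\<Sum>l<n. (if i = l then 1 else 0) * F l j) = (\<Sum>l<n. if l = i then F l j else 0)"
    by (rule sum.cong) auto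
  then have "(\<Sum>l<n. (if i = l then 1 else 0) * F l j) = F i j"
    using 0 by simp
  moreover have "(\<Sum>l<n. F i l * (if l = j then 1 else 0)) = F i j"
    using 0 by (simp add: if_distrib cong: if_cong)
  ultimately show ?case by simp
next
  case (Suc m)
  have "pw n F (Suc (Suc m)) i j = (\<Sum>l<n. (\<Sum>k<n. F i k * pw n F m k l) * F l j)"
    using Suc by simp
  also have "\<dots> = (\<Sum>k<n. F i k * (\<Sum>l<n. pw n F m k l * F l j))"
    by (simp add: sum_distrib_left sum_distrib_right mult.assoc) (rule sum.swap)
  finally show ?case by simp
qed

lemma pw_cong:
  assumes "\<And>a b. a < n \<Longrightarrow> b < n \<Longrightarrow> F a b = G a b" "j < n"
  shows "pw n F m i j = pw n G m i j"
  using assms(2) by (induction m arbitrary: j) (auto intro!: sum.cong simp: assms(1))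

lemma pw_transpose_scale:
  assumes "i < n" "j < n"
  shows "pw n (\<lambda>a b. c * F b a) m i j = c ^ m * pw n F m j i"
  using assms
proof (induction m arbitrary: i j)
  case 0 then show ?case by auto
next
  case (Suc m)
  have "pw n (\<lambda>a b. c * F b a) (Suc m) i j = (\<Sum>l<n. c ^ m * pw n F m l i * (c * F j l))"
    using Suc by simp
  also have "\<dots> = c ^ Suc m * (\<Sum>l<n. F j l * pw n F m l i)"
    by (simp add: sum_distrib_left algebra_simps)
  also have "\<dots> = c ^ Suc m * pw n F (Suc m) j i"
    using pw_Suc'[OF Suc.prems(2,1)] by simp
  finally show ?case .
qed

lemma pw_conj:
  assumes w: "\<And>a. a < n \<Longrightarrow> w a \<noteq> 0"
    and G: "\<And>a b. a < n \<Longrightarrow> b < n \<Longrightarrow> G a b = c * w a / w b * F a b"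
    and "i < n" "j < n"
  shows "pw n G m i j = c ^ m * w i / w j * pw n F m i j"
  using assms(4)
proof (induction m arbitrary: j)
  case 0 then show ?case using w[OF assms(3)] by auto
next
  case (Suc m)
  have "pw n G (Suc m) i j = (\<Sum>l<n. (c ^ m * w i / w l * pw n F m i l) * (c * w l / w j * F l j))"
    using Suc G by simp
  also have "\<dots> = (\<Sum>l<n. c ^ Suc m * w i / w j * (pw n F m i l * F l j))"
    by (rule sum.cong) (use w in auto)
  also have "\<dots> = c ^ Suc m * w i / w j * pw n F (Suc m) i j"
    by (simp add: sum_distrib_left)
  finally show ?case .
qed

lemma pw_bound:
  assumes K: "\<And>a b. a < n \<Longrightarrow> b < n \<Longrightarrow> \<bar>F a b\<bar> \<le> K" "0 \<le> K"
    and "i < n" "j < n"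
  shows "\<bar>pw n F m i j\<bar> \<le> (real n * K) ^ m"
  using assms(4)
proof (induction m arbitrary: j)
  case 0 then show ?case by auto
next
  case (Suc m)
  have "\<bar>pw n F (Suc m) i j\<bar> \<le> (\<Sum>l<n. \<bar>pw n F m i l * F l j\<bar>)"
    by (simp add: sum_abs)
  also have "\<dots> \<le> (\<Sum>l<n. (real n * K) ^ m * K)"
    by (rule sum_mono) (use Suc K in \<open>auto simp: abs_mult intro!: mult_mono\<close>)
  also have "\<dots> = (real n * K) ^ Suc m" by simp
  finally show ?case .
qed

lemma pw_diff_bound:
  assumes F: "\<And>a b. a < n \<Longrightarrow> b < n \<Longrightarrow> \<bar>F a b\<bar> \<le> K"
    and G: "\<And>a b. a < n \<Longrightarrow> b < n \<Longrightarrow> \<bar>G a b\<bar> \<le> K"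
    and D: "\<And>a b. a < n \<Longrightarrow> b < n \<Longrightarrow> \<bar>F a b - G a b\<bar> \<le> \<delta>"
    and K1: "1 \<le> K" and "i < n" "j < n"
  shows "\<bar>pw n F m i j - pw n G m i j\<bar> \<le> real m * (real n * K) ^ m * \<delta>"
  using assms(6)
proof (induction m arbitrary: j)
  case 0 then show ?case by auto
next
  case (Suc m)
  have d0: "0 \<le> \<delta>" using D[of i i] \<open>i < n\<close> by auto
  have "\<bar>pw n F (Suc m) i j - pw n G (Suc m) i j\<bar>
      = \<bar>\<Sum>l<n. (pw n F m i l - pw n G m i l) * F l j + pw n G m i l * (F l j - G l j)\<bar>"
    by (simp add: sum_subtractf[symmetric] algebra_simps)
  also have "\<dots> \<le> (\<Sum>l<n. \<bar>(pw n F m i l - pw n G m i l) * F l j + pw n G m i l * (F l j - G l j)\<bar>)"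
    by (rule sum_abs)
  also have "\<dots> \<le> (\<Sum>l<n. real m * (real n * K) ^ m * \<delta> * K + (real n * K) ^ m * \<delta>)"
  proof (rule sum_mono)
    fix l assume l: "l \<in> {..<n}"
    have a: "\<bar>(pw n F m i l - pw n G m i l) * F l j\<bar> \<le> real m * (real n * K) ^ m * \<delta> * K"
      unfolding abs_mult using Suc.IH[of l] F[of l j] l Suc.prems K1
      by (intro mult_mono) auto
    have b: "\<bar>pw n G m i l * (F l j - G l j)\<bar> \<le> (real n * K) ^ m * \<delta>"
      unfolding abs_mult using pw_bound[of n G K i l m] G D[of l j] l Suc.prems K1 \<open>i < n\<close>
      by (intro mult_mono) auto
    show "\<bar>(pw n F m i l - pw n G m i l) * F l j + pw n G m i l * (F l j - G l j)\<bar>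
        \<le> real m * (real n * K) ^ m * \<delta> * K + (real n * K) ^ m * \<delta>"
      using a b abs_triangle_ineq order_trans add_mono by fastforce
  qed
  also have "\<dots> \<le> (\<Sum>l<n. real m * (real n * K) ^ m * \<delta> * K + (real n * K) ^ m * \<delta> * K)"
    using d0 K1 by (intro sum_mono add_left_mono) (auto intro!: mult_left_mono[where b = K and a = 1, simplified])
  also have "\<dots> = real (Suc m) * (real n * K) ^ Suc m * \<delta>"
    by (simp add: algebra_simps)
  finally show ?case .
qed

lemma pw_mat:
  assumes A: "A \<in> carrier_mat n n" and "i < n" "j < n"
  shows "(A ^\<^sub>m m) $$ (i, j) = pw n (\<lambda>a b. A $$ (a, b)) m i j"
  using assms(3)
proof (induction m arbitrary: j)
  case 0 then show ?case using A \<open>i < n\<close> by simp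
next
  case (Suc m)
  have P: "A ^\<^sub>m m \<in> carrier_mat n n" using A by simp
  have "(A ^\<^sub>m Suc m) $$ (i, j) = (\<Sum>l = 0..<n. (A ^\<^sub>m m) $$ (i, l) * A $$ (l, j))"
    using P A Suc.prems \<open>i < n\<close> by (simp add: scalar_prod_def)
  then show ?case using Suc by (simp add: atLeast0LessThan)
qed


definition kb :: "nat \<Rightarrow> (nat \<Rightarrow> nat \<Rightarrow> real) \<Rightarrow> real" where
  "kb n F = 1 + (\<Sum>a<n. \<Sum>b<n. \<bar>F a b\<bar>)"

lemma kb_ge1: "1 \<le> kb n F"
  unfolding kb_def by (auto intro!: sum_nonneg)

lemma kb_bound: assumes "a < n" "b < n" shows "\<bar>F a b\<bar> \<le> kb n F"
proof -
  have "\<bar>F a b\<bar> \<le> (\<Sum>b'<n. \<bar>F a b'\<bar>)"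
    using assms by (intro member_le_sum) auto
  also have "\<dots> \<le> (\<Sum>a'<n. \<Sum>b'<n. \<bar>F a' b'\<bar>)"
    using assms by (intro member_le_sum[where f = "\<lambda>a'. \<Sum>b'<n. \<bar>F a' b'\<bar>"]) (auto intro!: sum_nonneg)
  finally show ?thesis unfolding kb_def by simp
qed

definition ex :: "nat \<Rightarrow> (nat \<Rightarrow> nat \<Rightarrow> real) \<Rightarrow> real \<Rightarrow> nat \<Rightarrow> nat \<Rightarrow> real" where
  "ex n F s i j = (\<Sum>m. s ^ m * pw n F m i j / fact m)"

lemma ex_term_bound:
  assumes "i < n" "j < n"
  shows "\<bar>s ^ m * pw n F m i j / fact m\<bar> \<le> inverse (fact m) * (\<bar>s\<bar> * real n * kb n F) ^ m"
proof -
  have k0: "0 \<le> kb n F" using kb_ge1[of n F] by linarith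
  have "\<bar>pw n F m i j\<bar> \<le> (real n * kb n F) ^ m"
    by (rule pw_bound[OF kb_bound k0 assms])
  then have h: "\<bar>s\<bar> ^ m * \<bar>pw n F m i j\<bar> \<le> \<bar>s\<bar> ^ m * (real n * kb n F) ^ m"
    by (intro mult_left_mono) auto
  have "\<bar>s ^ m * pw n F m i j / fact m\<bar> = (\<bar>s\<bar> ^ m * \<bar>pw n F m i j\<bar>) / fact m"
    by (simp add: abs_mult power_abs)
  also have "\<dots> \<le> (\<bar>s\<bar> ^ m * (real n * kb n F) ^ m) / fact m"
    by (rule divide_right_mono[OF h]) simp
  also have "\<dots> = inverse (fact m) * (\<bar>s\<bar> * real n * kb n F) ^ m"
    by (simp add: power_mult_distrib divide_inverse mult.commute mult.left_commute)
  finally show ?thesis .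
qed

lemma ex_summable:
  assumes "i < n" "j < n"
  shows "summable (\<lambda>m. s ^ m * pw n F m i j / fact m)"
  by (rule summable_comparison_test[OF _ summable_exp[of "\<bar>s\<bar> * real n * kb n F"]])
     (use ex_term_bound[OF assms] in auto)

lemma ex_cont:
  assumes "i < n" "j < n"
  shows "continuous_on S (\<lambda>s. ex n F s i j)"
proof -
  have e: "ex n F s i j = (\<Sum>m. (pw n F m i j / fact m) * s ^ m)" for s
    unfolding ex_def by (simp add: mult_ac)
  have "isCont (\<lambda>s. \<Sum>m. (pw n F m i j / fact m) * s ^ m) x" for x
    by (rule isCont_powser_converges_everywhere)
       (use ex_summable[OF assms] in \<open>simp add: mult_ac\<close>)
  then show ?thesis unfolding e by (intro continuous_at_imp_continuous_on) auto
qed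

lemma ex_conj:
  assumes w: "\<And>a. a < n \<Longrightarrow> w a \<noteq> 0"
    and G: "\<And>a b. a < n \<Longrightarrow> b < n \<Longrightarrow> G a b = c * w a / w b * F a b"
    and ij: "i < n" "j < n"
  shows "ex n G s i j = w i / w j * ex n F (c * s) i j"
proof -
  have pc: "\<And>m. pw n G m i j = c ^ m * w i / w j * pw n F m i j"
    by (rule pw_conj[OF w G ij])
  have "ex n G s i j = (\<Sum>m. w i / w j * ((c * s) ^ m * pw n F m i j / fact m))"
    unfolding ex_def pc by (simp add: power_mult_distrib mult_ac)
  also have "\<dots> = w i / w j * ex n F (c * s) i j"
    unfolding ex_def by (rule suminf_mult[OF ex_summable[OF ij]])
  finally show ?thesis .
qed

lemma ex_diff:
  assumes F: "\<And>a b. a < n \<Longrightarrow> b < n \<Longrightarrow> \<bar>F a b\<bar> \<le> K"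
    and G: "\<And>a b. a < n \<Longrightarrow> b < n \<Longrightarrow> \<bar>G a b\<bar> \<le> K"
    and D: "\<And>a b. a < n \<Longrightarrow> b < n \<Longrightarrow> \<bar>F a b - G a b\<bar> \<le> \<delta>"
    and K1: "1 \<le> K" and ij: "i < n" "j < n" and s: "\<bar>s\<bar> \<le> 1"
  shows "\<bar>ex n F s i j - ex n G s i j\<bar> \<le> \<delta> * (\<Sum>m. inverse (fact m) * (2 * real n * K) ^ m)"
proof -
  have d0: "0 \<le> \<delta>" using D[of i i] ij by auto
  have "ex n F s i j - ex n G s i j = (\<Sum>m. s ^ m * pw n F m i j / fact m - s ^ m * pw n G m i j / fact m)"
    unfolding ex_def by (rule suminf_diff[OF ex_summable[OF ij] ex_summable[OF ij]])
  also have "\<bar>\<dots>\<bar> \<le> (\<Sum>m. \<delta> * (inverse (fact m) * (2 * real n * K) ^ m))"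
    unfolding real_norm_def[symmetric]
  proof (rule norm_suminf_le)
    show "summable (\<lambda>m. \<delta> * (inverse (fact m) * (2 * real n * K) ^ m))"
      by (rule summable_mult[OF summable_exp])
    fix m
    have "\<bar>pw n F m i j - pw n G m i j\<bar> \<le> real m * (real n * K) ^ m * \<delta>"
      by (rule pw_diff_bound[OF F G D K1 ij])
    also have "\<dots> \<le> 2 ^ m * (real n * K) ^ m * \<delta>"
    proof -
      have "m \<le> 2 ^ m" using less_exp[of m] by simp
      then have "real m \<le> real (2 ^ m)" by (simp only: of_nat_le_iff)
      then have "real m \<le> 2 ^ m" by simp
      then show ?thesis using d0 K1 by (intro mult_right_mono) auto
    qed
    finally have h: "\<bar>pw n F m i j - pw n G m i j\<bar> \<le> (2 * real n * K) ^ m * \<delta>"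
      by (simp add: power_mult_distrib)
    have "\<bar>s ^ m * pw n F m i j / fact m - s ^ m * pw n G m i j / fact m\<bar>
        = \<bar>s\<bar> ^ m * \<bar>pw n F m i j - pw n G m i j\<bar> / fact m"
      by (simp add: abs_mult power_abs right_diff_distrib[symmetric] diff_divide_distrib[symmetric])
    also have "\<dots> \<le> 1 * ((2 * real n * K) ^ m * \<delta>) / fact m"
      by (intro divide_right_mono mult_mono h) (use s in \<open>auto intro: power_le_one\<close>)
    finally show "norm (s ^ m * pw n F m i j / fact m - s ^ m * pw n G m i j / fact m)
        \<le> \<delta> * (inverse (fact m) * (2 * real n * K) ^ m)"
      by (simp add: divide_inverse mult_ac)
  qed
  also have "\<dots> = \<delta> * (\<Sum>m. inverse (fact m) * (2 * real n * K) ^ m)"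
    by (rule suminf_mult[OF summable_exp])
  finally show ?thesis .
qed


definition qf :: "nat \<Rightarrow> real mat \<Rightarrow> (nat \<Rightarrow> real) \<Rightarrow> real" where
  "qf n X x = (\<Sum>i<n. \<Sum>j<n. X $$ (i, j) * x i * x j)"

definition symm :: "nat \<Rightarrow> real mat \<Rightarrow> bool" where
  "symm n X \<longleftrightarrow> (\<forall>i<n. \<forall>j<n. X $$ (i, j) = X $$ (j, i))"

definition pdef :: "nat \<Rightarrow> real mat \<Rightarrow> bool" where
  "pdef n X \<longleftrightarrow> (\<forall>x. (\<exists>i<n. x i \<noteq> 0) \<longrightarrow> 0 < qf n X x)"

definition schur :: "real mat \<Rightarrow> nat \<Rightarrow> real mat" where
  "schur X m = mat m m (\<lambda>(i, j). X $$ (Suc i, Suc j) - X $$ (Suc i, 0) * X $$ (0, Suc j) / X $$ (0, 0))"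

lemma qf_vec:
  assumes "X \<in> carrier_mat n n" "v \<in> carrier_vec n"
  shows "(X *\<^sub>v v) \<bullet> v = qf n X (\<lambda>i. v $ i)"
  using assms
  by (simp add: qf_def scalar_prod_def atLeast0LessThan sum_distrib_left mult_ac)

lemma qf_e0: "qf (Suc m) X (\<lambda>i. if i = 0 then 1 else 0) = X $$ (0, 0)"
  unfolding qf_def by (simp only: sum.lessThan_Suc_shift) simp

lemma qf_schur:
  assumes sy: "symm (Suc m) X" and g: "X $$ (0, 0) \<noteq> 0"
  shows "qf (Suc m) X x = X $$ (0, 0) * (x 0 + (\<Sum>j<m. X $$ (0, Suc j) * x (Suc j)) / X $$ (0, 0))\<^sup>2
           + qf m (schur X m) (\<lambda>i. x (Suc i))"
proof -
  define g where "g = X $$ (0, 0)"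
  define b where "b = (\<Sum>j<m. X $$ (0, Suc j) * x (Suc j))"
  define A where "A = (\<Sum>i<m. \<Sum>j<m. X $$ (Suc i, Suc j) * x (Suc i) * x (Suc j))"
  have c1: "(\<Sum>i<m. X $$ (Suc i, 0) * x (Suc i) * x 0) = b * x 0"
    unfolding b_def sum_distrib_right
    by (rule sum.cong) (use sy in \<open>auto simp: symm_def\<close>)
  have c2: "(\<Sum>j<m. X $$ (0, Suc j) * x 0 * x (Suc j)) = b * x 0"
    unfolding b_def sum_distrib_right by (rule sum.cong) auto
  have "qf (Suc m) X x = g * x 0 * x 0 + (\<Sum>j<m. X $$ (0, Suc j) * x 0 * x (Suc j))
      + ((\<Sum>i<m. X $$ (Suc i, 0) * x (Suc i) * x 0) + A)"
    unfolding qf_def A_def g_def by (simp only: sum.lessThan_Suc_shift sum.distrib)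
  then have q1: "qf (Suc m) X x = g * x 0 * x 0 + 2 * b * x 0 + A"
    using c1 c2 by simp
  have "qf m (schur X m) (\<lambda>i. x (Suc i)) =
      (\<Sum>i<m. \<Sum>j<m. X $$ (Suc i, Suc j) * x (Suc i) * x (Suc j)
        - (X $$ (0, Suc i) * x (Suc i)) * (X $$ (0, Suc j) * x (Suc j)) / g)"
    unfolding qf_def schur_def g_def
    by (intro sum.cong refl) (use sy in \<open>auto simp: symm_def algebra_simps\<close>)
  also have "\<dots> = A - (\<Sum>i<m. \<Sum>j<m. (X $$ (0, Suc i) * x (Suc i)) * (X $$ (0, Suc j) * x (Suc j))) / g"
    unfolding A_def
    by (simp add: sum_subtractf sum_divide_distrib)
  also have "(\<Sum>i<m. \<Sum>j<m. (X $$ (0, Suc i) * x (Suc i)) * (X $$ (0, Suc j) * x (Suc j))) = b * b"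
    unfolding b_def by (rule sum_product[symmetric])
  finally have q2: "qf m (schur X m) (\<lambda>i. x (Suc i)) = A - b * b / g" .
  have gg: "g \<noteq> 0" using g g_def by simp
  show ?thesis
    unfolding q1 q2 b_def[symmetric] g_def[symmetric] using gg
    by (simp add: field_simps power2_eq_square)
qed

lemma schur_carrier: "schur X m \<in> carrier_mat m m"
  unfolding schur_def by simp

lemma schur_symm: assumes "symm (Suc m) X" shows "symm m (schur X m)"
  using assms unfolding symm_def schur_def by (auto simp: mult.commute)

lemma schur_pdef:
  assumes sy: "symm (Suc m) X" and pd: "pdef (Suc m) X" and g: "X $$ (0, 0) \<noteq> 0"
  shows "pdef m (schur X m)"
  unfolding pdef_def
proof (intro allI impI)
  fix z :: "nat \<Rightarrow> real" assume "\<exists>i<m. z i \<noteq> 0"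
  then obtain i where i: "i < m" "z i \<noteq> 0" by auto
  define x where "x = (\<lambda>k. if k = 0 then - (\<Sum>j<m. X $$ (0, Suc j) * z j) / X $$ (0, 0) else z (k - 1))"
  have xs: "(\<lambda>k. x (Suc k)) = z" unfolding x_def by auto
  have "\<exists>k<Suc m. x k \<noteq> 0" using i by (intro exI[of _ "Suc i"]) (auto simp: x_def)
  then have "0 < qf (Suc m) X x" using pd unfolding pdef_def by blast
  also have "qf (Suc m) X x = qf m (schur X m) z"
    unfolding qf_schur[OF sy g] xs by (simp add: x_def xs)
  finally show "0 < qf m (schur X m) z" .
qed

lemma det_schur:
  assumes X: "X \<in> carrier_mat (Suc m) (Suc m)" and g: "X $$ (0, 0) \<noteq> 0"
  shows "det X = X $$ (0, 0) * det (schur X m)"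
proof -
  define E where "E = mat (Suc m) (Suc m) (\<lambda>(i, j). if i = j then 1 else if j = 0 then - X $$ (i, 0) / X $$ (0, 0) else 0)"
  have E: "E \<in> carrier_mat (Suc m) (Suc m)" unfolding E_def by simp
  have dE: "det E = 1"
  proof -
    have "det E = prod_list (diag_mat E)"
      by (rule det_lower_triangular[OF _ E]) (auto simp: E_def)
    also have "\<dots> = 1" unfolding prod_list_diag_prod using E by (simp add: E_def)
    finally show ?thesis .
  qed
  define Z where "Z = E * X"
  have Z: "Z \<in> carrier_mat (Suc m) (Suc m)" unfolding Z_def using E X by simp
  have dZ: "det Z = det X" unfolding Z_def using det_mult[OF E X] dE by simp
  have Zij: "Z $$ (i, j) = X $$ (i, j) + (if i = 0 then 0 else - X $$ (i, 0) / X $$ (0, 0) * X $$ (0, j))"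
    if ij: "i < Suc m" "j < Suc m" for i j
  proof -
    have "Z $$ (i, j) = (\<Sum>k<Suc m. E $$ (i, k) * X $$ (k, j))"
      unfolding Z_def using E X ij by (simp add: scalar_prod_def atLeast0LessThan)
    also have "\<dots> = (\<Sum>k<Suc m. (if k = i then X $$ (i, j) else 0)
        + (if k = 0 then (if i = 0 then 0 else - X $$ (i, 0) / X $$ (0, 0) * X $$ (0, j)) else 0))"
      by (rule sum.cong) (use ij in \<open>auto simp: E_def\<close>)
    also have "\<dots> = X $$ (i, j) + (if i = 0 then 0 else - X $$ (i, 0) / X $$ (0, 0) * X $$ (0, j))"
      using ij by (simp add: sum.distrib)
    finally show ?thesis .
  qed
  have "det Z = (\<Sum>i<Suc m. Z $$ (i, 0) * cofactor Z i 0)"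
    by (rule laplace_expansion_column[OF Z]) simp
  also have "\<dots> = Z $$ (0, 0) * cofactor Z 0 0"
  proof -
    have "(\<Sum>i<Suc m. Z $$ (i, 0) * cofactor Z i 0) = (\<Sum>i<Suc m. if i = 0 then Z $$ (0, 0) * cofactor Z 0 0 else 0)"
      by (rule sum.cong) (use g in \<open>auto simp: Zij\<close>)
    then show ?thesis by simp
  qed
  also have "cofactor Z 0 0 = det (schur X m)"
  proof -
    have "mat_delete Z 0 0 = schur X m"
      by (rule eq_matI) (use Z in \<open>auto simp: mat_delete_def schur_def Zij\<close>)
    then show ?thesis unfolding cofactor_def by simp
  qed
  finally show ?thesis using dZ Zij[of 0 0] by simp
qed


lemma schur_cut:
  assumes sy: "symm (Suc m) X" and g: "X $$ (0, 0) \<noteq> 0"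
  shows "qf (Suc m) X (\<lambda>k. if k = 0 then - (\<Sum>j<m. X $$ (0, Suc j) * z j) / X $$ (0, 0) else z (k - 1))
       = qf m (schur X m) z"
proof -
  define x where "x = (\<lambda>k. if k = 0 then - (\<Sum>j<m. X $$ (0, Suc j) * z j) / X $$ (0, 0) else z (k - 1))"
  have xs: "(\<lambda>k. x (Suc k)) = z" unfolding x_def by auto
  show ?thesis
    unfolding x_def[symmetric] qf_schur[OF sy g] xs by (simp add: x_def xs)
qed

lemma pd_lower:
  assumes "X \<in> carrier_mat n n" "symm n X" "pdef n X"
  shows "\<exists>c>0. \<forall>x. c * (\<Sum>i<n. (x i)\<^sup>2) \<le> qf n X x"
  using assms
proof (induction n arbitrary: X)
  case 0 then show ?case by (intro exI[of _ 1]) (simp add: qf_def)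
next
  case (Suc m)
  define g where "g = X $$ (0, 0)"
  have P: "\<forall>x. (\<exists>i<Suc m. x i \<noteq> 0) \<longrightarrow> 0 < qf (Suc m) X x" using Suc.prems(3) unfolding pdef_def .
  have "0 < qf (Suc m) X (\<lambda>i. if i = 0 then 1 else 0)" by (rule P[rule_format]) auto
  then have g0: "0 < g" unfolding qf_e0 g_def .
  then have gn: "X $$ (0, 0) \<noteq> 0" unfolding g_def by simp
  obtain c' where c': "0 < c'" "\<And>z. c' * (\<Sum>i<m. (z i)\<^sup>2) \<le> qf m (schur X m) z"
    using Suc.IH[OF schur_carrier schur_symm[OF Suc.prems(2)] schur_pdef[OF Suc.prems(2,3) gn]] by blast
  define \<beta> where "\<beta> = (\<Sum>j<m. (X $$ (0, Suc j))\<^sup>2)"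
  have b0: "0 \<le> \<beta>" unfolding \<beta>_def by (intro sum_nonneg) auto
  define c where "c = min (g / 2) (c' / (1 + 2 * \<beta> / g\<^sup>2))"
  have dpos: "0 < 1 + 2 * \<beta> / g\<^sup>2" using b0 g0 by (simp add: add_pos_nonneg)
  have c0: "0 < c" unfolding c_def using g0 c'(1) dpos by simp
  show ?case
  proof (intro exI[of _ c] conjI allI c0)
    fix x :: "nat \<Rightarrow> real"
    define z where "z = (\<lambda>i. x (Suc i))"
    define b where "b = (\<Sum>j<m. X $$ (0, Suc j) * x (Suc j))"
    define t where "t = x 0 + b / g"
    define Z where "Z = (\<Sum>i<m. (z i)\<^sup>2)"
    have Z0: "0 \<le> Z" unfolding Z_def by (intro sum_nonneg) auto
    have q: "qf (Suc m) X x = g * t\<^sup>2 + qf m (schur X m) z"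
      unfolding qf_schur[OF Suc.prems(2) gn] t_def b_def g_def z_def by simp
    have bb: "b\<^sup>2 \<le> \<beta> * Z"
      unfolding b_def \<beta>_def Z_def z_def by (rule Cauchy_Schwarz_ineq_sum)
    have x0: "x 0 = t - b / g" unfolding t_def by simp
    have e1: "2 * t\<^sup>2 + 2 * (b / g)\<^sup>2 - (t - b / g)\<^sup>2 = (t + b / g)\<^sup>2"
      by (simp add: power2_eq_square algebra_simps)
    have "0 \<le> (t + b / g)\<^sup>2" by simp
    then have "(x 0)\<^sup>2 \<le> 2 * t\<^sup>2 + 2 * (b / g)\<^sup>2"
      unfolding x0 using e1 by linarith
    also have "(b / g)\<^sup>2 \<le> \<beta> / g\<^sup>2 * Z"
    proof -
      have "(b / g)\<^sup>2 = b\<^sup>2 / g\<^sup>2" by (simp add: power_divide)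
      also have "\<dots> \<le> (\<beta> * Z) / g\<^sup>2" by (rule divide_right_mono[OF bb]) simp
      finally show ?thesis by simp
    qed
    finally have x0b: "(x 0)\<^sup>2 \<le> 2 * t\<^sup>2 + 2 * \<beta> / g\<^sup>2 * Z" by simp
    have sx: "(\<Sum>i<Suc m. (x i)\<^sup>2) = (x 0)\<^sup>2 + Z"
      unfolding Z_def z_def by (simp only: sum.lessThan_Suc_shift)
    have "(x 0)\<^sup>2 + Z \<le> 2 * t\<^sup>2 + (1 + 2 * \<beta> / g\<^sup>2) * Z"
      using x0b by (simp add: algebra_simps)
    then have "c * ((x 0)\<^sup>2 + Z) \<le> c * (2 * t\<^sup>2 + (1 + 2 * \<beta> / g\<^sup>2) * Z)"
      using c0 by (intro mult_left_mono) auto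
    then have "c * (\<Sum>i<Suc m. (x i)\<^sup>2) \<le> c * (2 * t\<^sup>2) + c * ((1 + 2 * \<beta> / g\<^sup>2) * Z)"
      unfolding sx by (simp add: distrib_left)
    also have "c * (2 * t\<^sup>2) \<le> g * t\<^sup>2"
    proof -
      have "c \<le> g / 2" unfolding c_def by (rule min.cobounded1)
      then have "c * 2 \<le> g" by linarith
      then have "(c * 2) * t\<^sup>2 \<le> g * t\<^sup>2" by (intro mult_right_mono) auto
      then show ?thesis by (simp add: mult.assoc)
    qed
    also have "c * ((1 + 2 * \<beta> / g\<^sup>2) * Z) \<le> c' * Z"
    proof -
      have "c \<le> c' / (1 + 2 * \<beta> / g\<^sup>2)" unfolding c_def by (rule min.cobounded2)
      then have "c * (1 + 2 * \<beta> / g\<^sup>2) \<le> c'"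
        using dpos by (simp add: pos_le_divide_eq)
      then have "(c * (1 + 2 * \<beta> / g\<^sup>2)) * Z \<le> c' * Z" using Z0 by (intro mult_right_mono) auto
      then show ?thesis by (simp add: mult.assoc)
    qed
    also have "c' * Z \<le> qf m (schur X m) z" unfolding Z_def by (rule c'(2))
    finally show "c * (\<Sum>i<Suc m. (x i)\<^sup>2) \<le> qf (Suc m) X x" unfolding q by simp
  qed
qed

lemma det_mono:
  assumes "X \<in> carrier_mat n n" "Y \<in> carrier_mat n n" "symm n X" "symm n Y" "pdef n X"
    "\<And>x. qf n X x \<le> qf n Y x"
  shows "0 < det X \<and> det X \<le> det Y"
  using assms
proof (induction n arbitrary: X Y)
  case 0 then show ?case by simp
next
  case (Suc m)
  have P: "\<forall>x. (\<exists>i<Suc m. x i \<noteq> 0) \<longrightarrow> 0 < qf (Suc m) X x" using Suc.prems(5) unfolding pdef_def .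
  have "0 < qf (Suc m) X (\<lambda>i. if i = 0 then 1 else 0)" by (rule P[rule_format]) auto
  then have gX: "0 < X $$ (0, 0)" unfolding qf_e0 .
  have gY: "X $$ (0, 0) \<le> Y $$ (0, 0)" using Suc.prems(6)[of "\<lambda>i. if i = 0 then 1 else 0"]
    by (simp add: qf_e0)
  have gXn: "X $$ (0, 0) \<noteq> 0" and gYn: "Y $$ (0, 0) \<noteq> 0" using gX gY by auto
  have le: "qf m (schur X m) z \<le> qf m (schur Y m) z" for z
  proof -
    define x where "x = (\<lambda>k. if k = 0 then - (\<Sum>j<m. Y $$ (0, Suc j) * z j) / Y $$ (0, 0) else z (k - 1))"
    have xs: "(\<lambda>k. x (Suc k)) = z" unfolding x_def by auto
    have "qf m (schur X m) z \<le> qf (Suc m) X x"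
      unfolding qf_schur[OF Suc.prems(3) gXn] xs using gX by simp
    also have "\<dots> \<le> qf (Suc m) Y x" by (rule Suc.prems(6))
    also have "\<dots> = qf m (schur Y m) z" unfolding x_def by (rule schur_cut[OF Suc.prems(4) gYn])
    finally show ?thesis .
  qed
  have IH: "0 < det (schur X m) \<and> det (schur X m) \<le> det (schur Y m)"
    by (rule Suc.IH[OF schur_carrier schur_carrier schur_symm[OF Suc.prems(3)] schur_symm[OF Suc.prems(4)]
          schur_pdef[OF Suc.prems(3,5) gXn] le])
  have dX: "det X = X $$ (0, 0) * det (schur X m)" by (rule det_schur[OF Suc.prems(1) gXn])
  have dY: "det Y = Y $$ (0, 0) * det (schur Y m)" by (rule det_schur[OF Suc.prems(2) gYn])
  have "X $$ (0, 0) * det (schur X m) \<le> Y $$ (0, 0) * det (schur Y m)"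
    by (rule mult_mono) (use IH gX gY in auto)
  moreover have "0 < X $$ (0, 0) * det (schur X m)" using IH gX by simp
  ultimately show ?case unfolding dX dY by simp
qed


lemma pick_ivl: "a + c < b \<Longrightarrow> pick {a..<b} c = a + c"
proof (induction c)
  case 0 then show ?case by (auto intro!: Least_equality)
next
  case (Suc c)
  then have "pick {a..<b} c = a + c" by simp
  then show ?case using Suc.prems by (auto intro!: Least_equality)
qed

lemma (in vec_space) non_distinct_low_rank_rect:
  assumes "A \<in> carrier_mat n nc" and "\<not> distinct (cols A)"
  shows "rank A < nc"
proof -
  obtain S where "maximal S (\<lambda>T. T \<subseteq> set (cols A) \<and> lin_indpt T)"
    using maximal_exists[of "(\<lambda>T. T \<subseteq> set (cols A) \<and> lin_indpt T)" "card (set (cols A))" "{}"]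
    by (meson List.finite_set card_mono empty_iff empty_subsetI finite_lin_indpt2 rev_finite_subset)
  then have "card S \<le> card (set (cols A))" by (simp add: card_mono maximal_def)
  then have "card S < nc"
    using assms(1) cols_length card_length \<open>\<not> distinct (cols A)\<close> card_distinct carrier_matD(2) nat_less_le
    by (metis dual_order.antisym dual_order.trans)
  then show ?thesis
    using rank_card_indpt[OF \<open>A \<in> carrier_mat n nc\<close> \<open>maximal S (\<lambda>T. T \<subseteq> set (cols A) \<and> lin_indpt T)\<close>]
    by simp
qed

lemma full_rank_inj:
  assumes A: "(A :: real mat) \<in> carrier_mat n nc" and rk: "vec_space.rank n A = nc"
    and v: "v \<in> carrier_vec nc" and Av: "A *\<^sub>v v = 0\<^sub>v n"
  shows "v = 0\<^sub>v nc"
proof (rule ccontr)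
  assume nz: "v \<noteq> 0\<^sub>v nc"
  show False
  proof (cases "distinct (cols A)")
    case True
    show False using vec_space.full_rank_lin_indpt[OF A rk True] vec_space.lin_depI[OF A v nz Av True] by blast
  next
    case False
    then show False using vec_space.non_distinct_low_rank_rect[OF A False] rk by simp
  qed
qed

locale blocks =
  fixes N :: nat and B :: "real mat" and r :: nat and p :: "nat \<Rightarrow> nat"
  assumes bs: "block_structure N B r p"
begin

abbreviation off where "off \<equiv> blk_off p"

definition bk :: "nat \<Rightarrow> nat" where "bk i = (LEAST k. i < off (Suc k))"

lemma Bc: "B \<in> carrier_mat N N" using bs unfolding block_structure_def by simp

lemma off_Suc: "off (Suc k) = off k + p k" unfolding blk_off_def by simp

lemma off_mono: "k \<le> k' \<Longrightarrow> off k \<le> off k'"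
  unfolding blk_off_def by (intro sum_mono2) auto

lemma off_0: "off 0 = 0" unfolding blk_off_def by simp

lemma off_r: "off (Suc r) = N"
  using bs unfolding block_structure_def blk_off_def by (simp add: lessThan_Suc_atMost)

lemma bk_prop:
  assumes "i < N"
  shows "bk i \<le> r" "off (bk i) \<le> i" "i < off (Suc (bk i))"
proof -
  have w: "i < off (Suc r)" using assms off_r by simp
  show "bk i \<le> r" unfolding bk_def by (rule Least_le[of "\<lambda>k. i < off (Suc k)", OF w])
  show "i < off (Suc (bk i))" unfolding bk_def by (rule LeastI[of "\<lambda>k. i < off (Suc k)", OF w])
  show "off (bk i) \<le> i"
  proof (cases "bk i")
    case 0 then show ?thesis by (simp add: off_0)
  next
    case (Suc k)
    have "\<not> i < off (Suc k)" using not_less_Least[of k "\<lambda>k. i < off (Suc k)"] Suc unfolding bk_def by simp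
    then show ?thesis using Suc by simp
  qed
qed

lemma bk_unique:
  assumes "off k \<le> i" "i < off (Suc k)" and iN: "i < N"
  shows "bk i = k"
proof -
  note b = bk_prop[OF iN]
  show ?thesis
  proof (rule ccontr)
    assume "bk i \<noteq> k"
    then consider "bk i < k" | "k < bk i" by linarith
    then show False
    proof cases
      case 1 then have "off (Suc (bk i)) \<le> off k" by (intro off_mono) simp
      then show False using b assms by simp
    next
      case 2 then have "off (Suc k) \<le> off (bk i)" by (intro off_mono) simp
      then show False using b assms by simp
    qed
  qed
qed

lemma in_blk_idx: "i < N \<Longrightarrow> i \<in> blk_idx p k \<longleftrightarrow> bk i = k"
  using bk_prop[of i] bk_unique[of k i] unfolding blk_idx_def by (auto simp: off_Suc)

lemma bk_0: "i < N \<Longrightarrow> bk i = 0 \<longleftrightarrow> i < p 0"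
  using bk_prop[of i] bk_unique[of 0 i] by (auto simp: off_Suc off_0)

lemma blk_idx_N: "k \<le> r \<Longrightarrow> {x. x < N \<and> x \<in> blk_idx p k} = blk_idx p k"
  using off_mono[of "Suc k" "Suc r"] off_r unfolding blk_idx_def by (auto simp: off_Suc)

lemma card_blk: "k \<le> r \<Longrightarrow> card {x. x < N \<and> x \<in> blk_idx p k} = p k"
  unfolding blk_idx_N by (simp add: blk_idx_def)

lemma blk_carrier: "k \<le> r \<Longrightarrow> l \<le> r \<Longrightarrow> blk B p k l \<in> carrier_mat (p k) (p l)"
  unfolding blk_def using Bc card_blk by (auto simp: dim_submatrix)

lemma blk_index:
  assumes "k \<le> r" "l \<le> r" "a < p k" "b < p l"
  shows "blk B p k l $$ (a, b) = B $$ (off k + a, off l + b)"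
proof -
  have "blk B p k l $$ (a, b) = B $$ (pick (blk_idx p k) a, pick (blk_idx p l) b)"
    unfolding blk_def by (rule submatrix_index) (use assms Bc card_blk in auto)
  also have "pick (blk_idx p k) a = off k + a" unfolding blk_idx_def by (rule pick_ivl) (use assms in simp)
  also have "pick (blk_idx p l) b = off l + b" unfolding blk_idx_def by (rule pick_ivl) (use assms in simp)
  finally show ?thesis .
qed

lemma B_zero:
  assumes "i < N" "j < N" "Suc (bk i) < bk j"
  shows "B $$ (i, j) = 0"
proof -
  let ?k = "bk i" and ?l = "bk j"
  have kr: "?k \<le> r" "?l \<le> r" using bk_prop assms by auto
  have z: "blk B p ?k ?l = 0\<^sub>m (p ?k) (p ?l)"
    using bs kr assms(3) unfolding block_structure_def by blast
  have a: "i - off ?k < p ?k" "j - off ?l < p ?l"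
    using bk_prop[OF assms(1)] bk_prop[OF assms(2)] by (auto simp: off_Suc)
  have "B $$ (i, j) = blk B p ?k ?l $$ (i - off ?k, j - off ?l)"
    using blk_index[OF kr a] bk_prop[OF assms(1)] bk_prop[OF assms(2)] by simp
  then show ?thesis unfolding z using a by simp
qed

definition Bf where "Bf a b = B $$ (a, b)"
definition B0f where "B0f a b = B0_of N B r p $$ (a, b)"

lemma B0f_eq:
  assumes "i < N" "j < N"
  shows "B0f i j = (if bk j = Suc (bk i) then Bf i j else 0)"
proof -
  have "(\<exists>k<r. i \<in> blk_idx p k \<and> j \<in> blk_idx p (Suc k)) \<longleftrightarrow> bk j = Suc (bk i)"
    using in_blk_idx[OF assms(1)] in_blk_idx[OF assms(2)] bk_prop[OF assms(2)] by auto
  then show ?thesis unfolding B0f_def Bf_def B0_of_def using assms by simp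
qed

definition apf :: "(nat \<Rightarrow> nat \<Rightarrow> real) \<Rightarrow> (nat \<Rightarrow> real) \<Rightarrow> nat \<Rightarrow> real" where
  "apf F y i = (\<Sum>l<N. F i l * y l)"

fun itf :: "(nat \<Rightarrow> nat \<Rightarrow> real) \<Rightarrow> nat \<Rightarrow> (nat \<Rightarrow> real) \<Rightarrow> nat \<Rightarrow> real" where
  "itf F 0 y = y"
| "itf F (Suc m) y = apf F (itf F m y)"

lemma itf_Suc': "itf F (Suc m) y = itf F m (apf F y)"
  by (induction m) auto

lemma pw_itf: "i < N \<Longrightarrow> (\<Sum>j<N. pw N F m i j * y j) = itf F m y i"
proof (induction m arbitrary: i)
  case 0
  have "(\<Sum>j<N. pw N F 0 i j * y j) = (\<Sum>j<N. if j = i then y j else 0)"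
    by (rule sum.cong) auto
  then show ?case using 0 by simp
next
  case (Suc m)
  have "(\<Sum>j<N. pw N F (Suc m) i j * y j) = (\<Sum>j<N. \<Sum>l<N. F i l * pw N F m l j * y j)"
    by (intro sum.cong refl) (simp add: pw_Suc'[OF Suc.prems] sum_distrib_right mult.assoc del: pw.simps)
  also have "\<dots> = (\<Sum>l<N. F i l * (\<Sum>j<N. pw N F m l j * y j))"
    by (subst sum.swap) (simp add: sum_distrib_left mult.assoc)
  also have "\<dots> = (\<Sum>l<N. F i l * itf F m y l)"
    by (intro sum.cong refl) (simp add: Suc.IH)
  finally show ?case by (simp add: apf_def)
qed

lemma apf_B0_top: assumes "i < N" "bk i = r" shows "apf B0f y i = 0"
  unfolding apf_def
proof (intro sum.neutral ballI)
  fix l assume "l \<in> {..<N}"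
  then show "B0f i l * y l = 0" using bk_prop(1)[of l] assms by (simp add: B0f_eq)
qed

lemma apf_B0_blk:
  assumes iN: "i < N" and k: "bk i = k" "k < r"
  shows "apf B0f y i = (blk B p k (Suc k) *\<^sub>v vec (p (Suc k)) (\<lambda>b. y (off (Suc k) + b))) $ (i - off k)"
proof -
  have ia: "i - off k < p k" using bk_prop[OF iN] k by (auto simp: off_Suc)
  have "apf B0f y i = (\<Sum>l<N. if l \<in> {off (Suc k)..<off (Suc k) + p (Suc k)} then Bf i l * y l else 0)"
    unfolding apf_def
    by (intro sum.cong refl) (use iN in \<open>simp add: B0f_eq k(1) in_blk_idx[symmetric] blk_idx_def\<close>)
  also have "\<dots> = (\<Sum>l\<in>{off (Suc k)..<off (Suc k) + p (Suc k)}. Bf i l * y l)"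
  proof -
    have "{off (Suc k)..<off (Suc k) + p (Suc k)} \<subseteq> {..<N}"
      using off_mono[of "Suc (Suc k)" "Suc r"] off_r k by (auto simp: off_Suc)
    then have e: "{..<N} \<inter> {off (Suc k)..<off (Suc k) + p (Suc k)} = {off (Suc k)..<off (Suc k) + p (Suc k)}"
      by blast
    show ?thesis unfolding sum.inter_restrict[OF finite_lessThan, symmetric] e ..
  qed
  also have "\<dots> = (\<Sum>b\<in>{0..<p (Suc k)}. Bf i (b + off (Suc k)) * y (b + off (Suc k)))"
    using sum.shift_bounds_nat_ivl[of "\<lambda>l. Bf i l * y l" 0 "off (Suc k)" "p (Suc k)"] by (simp add: add.commute)
  also have "\<dots> = (blk B p k (Suc k) *\<^sub>v vec (p (Suc k)) (\<lambda>b. y (off (Suc k) + b))) $ (i - off k)"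
    using blk_carrier[of k "Suc k"] k ia bk_prop[OF iN]
    by (auto simp: scalar_prod_def blk_index Bf_def add.commute intro!: sum.cong)
  finally show ?thesis .
qed

lemma nilp: "i < N \<Longrightarrow> r < bk i + m \<Longrightarrow> itf B0f m y i = 0"
proof (induction m arbitrary: i)
  case 0 then show ?case using bk_prop by force
next
  case (Suc m)
  have "itf B0f (Suc m) y i = (\<Sum>l<N. B0f i l * itf B0f m y l)" by (simp add: apf_def)
  also have "\<dots> = 0"
    by (rule sum.neutral) (use Suc in \<open>auto simp: B0f_eq\<close>)
  finally show ?case .
qed

lemma blk_rank: "k < r \<Longrightarrow> vec_space.rank (p k) (blk B p k (Suc k)) = p (Suc k)"
  using bs unfolding block_structure_def by blast

lemma chain_inj:
  "j \<le> r \<Longrightarrow> (\<And>i. i < N \<Longrightarrow> bk i = 0 \<Longrightarrow> itf B0f j y i = 0) \<Longrightarrow> i < N \<Longrightarrow> bk i = j \<Longrightarrow> y i = 0"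
proof (induction j arbitrary: y i)
  case 0 then show ?case by simp
next
  case (Suc j)
  define y' where "y' = apf B0f y"
  have y'0: "y' i' = 0" if "i' < N" "bk i' = j" for i'
    by (rule Suc.IH[of y' i']) (use Suc.prems that in \<open>auto simp: y'_def itf_Suc'[symmetric]\<close>)
  define v where "v = vec (p (Suc j)) (\<lambda>b. y (off (Suc j) + b))"
  have jr: "j < r" using Suc.prems by simp
  have "blk B p j (Suc j) *\<^sub>v v = 0\<^sub>v (p j)"
  proof (rule eq_vecI)
    show "dim_vec (blk B p j (Suc j) *\<^sub>v v) = dim_vec (0\<^sub>v (p j))"
      using blk_carrier[of j "Suc j"] jr by simp
    fix a assume "a < dim_vec (0\<^sub>v (p j))"
    then have a: "a < p j" by simp
    have iN: "off j + a < N" using off_mono[of "Suc j" "Suc r"] off_r jr a by (simp add: off_Suc)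
    have bka: "bk (off j + a) = j" by (rule bk_unique) (use a iN in \<open>auto simp: off_Suc\<close>)
    have "(blk B p j (Suc j) *\<^sub>v v) $ a = apf B0f y (off j + a)"
      using apf_B0_blk[OF iN bka jr] by (simp add: v_def)
    also have "\<dots> = 0" using y'0[OF iN bka] by (simp add: y'_def)
    finally show "(blk B p j (Suc j) *\<^sub>v v) $ a = 0\<^sub>v (p j) $ a" using a by simp
  qed
  then have v0: "v = 0\<^sub>v (p (Suc j))"
    by (intro full_rank_inj[OF blk_carrier blk_rank[OF jr]]) (use jr in \<open>auto simp: v_def\<close>)
  have "i - off (Suc j) < p (Suc j)" using bk_prop[OF Suc.prems(3)] Suc.prems(4) by (auto simp: off_Suc)
  then have "v $ (i - off (Suc j)) = 0" using v0 by simp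
  then show ?case using bk_prop[OF Suc.prems(3)] Suc.prems(4) \<open>i - off (Suc j) < p (Suc j)\<close>
    by (simp add: v_def)
qed

end


lemma sum4_swap:
  "(\<Sum>i\<in>A. \<Sum>j\<in>B. \<Sum>k\<in>C. \<Sum>l\<in>D. f i j k l) = (\<Sum>k\<in>C. \<Sum>l\<in>D. \<Sum>i\<in>A. \<Sum>j\<in>B. (f i j k l :: real))"
proof -
  have "(\<Sum>i\<in>A. \<Sum>j\<in>B. \<Sum>k\<in>C. \<Sum>l\<in>D. f i j k l) = (\<Sum>i\<in>A. \<Sum>k\<in>C. \<Sum>j\<in>B. \<Sum>l\<in>D. f i j k l)"
    by (rule sum.cong[OF refl], rule sum.swap)
  also have "\<dots> = (\<Sum>k\<in>C. \<Sum>i\<in>A. \<Sum>j\<in>B. \<Sum>l\<in>D. f i j k l)" by (rule sum.swap)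
  also have "\<dots> = (\<Sum>k\<in>C. \<Sum>i\<in>A. \<Sum>l\<in>D. \<Sum>j\<in>B. f i j k l)"
    by (intro sum.cong[OF refl], rule sum.swap)
  also have "\<dots> = (\<Sum>k\<in>C. \<Sum>l\<in>D. \<Sum>i\<in>A. \<Sum>j\<in>B. f i j k l)"
    by (rule sum.cong[OF refl], rule sum.swap)
  finally show ?thesis .
qed

definition Vf :: "nat \<Rightarrow> (nat \<Rightarrow> nat \<Rightarrow> real) \<Rightarrow> real \<Rightarrow> (nat \<Rightarrow> real) \<Rightarrow> nat \<Rightarrow> real" where
  "Vf n F s x k = (\<Sum>i<n. ex n F (- s) k i * x i)"

lemma ex_cont_neg:
  assumes "i < n" "j < n"
  shows "continuous_on S (\<lambda>s. ex n F (- s) i j)"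
  by (rule continuous_on_compose2[OF ex_cont[OF assms, where F=F and S=UNIV]]) (auto intro: continuous_intros)

lemma Vf_cont: "k < n \<Longrightarrow> continuous_on S (\<lambda>s. Vf n F s x k)"
  unfolding Vf_def by (intro continuous_on_sum continuous_on_mult_right ex_cont_neg) auto

lemma Emat_carrier: "Bm \<in> carrier_mat n n \<Longrightarrow> Emat Bm s \<in> carrier_mat n n"
  unfolding Emat_def mat_exp_def by simp

lemma Emat_entry:
  assumes Bm: "Bm \<in> carrier_mat n n" and ik: "i < n" "k < n"
  shows "Emat Bm s $$ (i, k) = ex n (\<lambda>a b. Bm $$ (a, b)) (- s) k i"
proof -
  let ?A = "(- s) \<cdot>\<^sub>m transpose_mat Bm"
  have A: "?A \<in> carrier_mat n n" using Bm by simp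
  have "Emat Bm s $$ (i, k) = (\<Sum>m. (?A ^\<^sub>m m) $$ (i, k) / fact m)"
    unfolding Emat_def mat_exp_def using Bm ik by simp
  also have "\<dots> = (\<Sum>m. (- s) ^ m * pw n (\<lambda>a b. Bm $$ (a, b)) m k i / fact m)"
  proof (rule arg_cong[where f = suminf], rule ext)
    fix m
    have "(?A ^\<^sub>m m) $$ (i, k) = pw n (\<lambda>a b. ?A $$ (a, b)) m i k" by (rule pw_mat[OF A ik])
    also have "\<dots> = pw n (\<lambda>a b. (- s) * Bm $$ (b, a)) m i k"
      by (rule pw_cong) (use Bm ik in auto)
    also have "\<dots> = (- s) ^ m * pw n (\<lambda>a b. Bm $$ (a, b)) m k i"
      by (rule pw_transpose_scale[OF ik])
    finally show "(?A ^\<^sub>m m) $$ (i, k) / fact m = (- s) ^ m * pw n (\<lambda>a b. Bm $$ (a, b)) m k i / fact m"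
      by simp
  qed
  finally show ?thesis unfolding ex_def .
qed

lemma trip_entry:
  assumes E: "E \<in> carrier_mat n n" and A: "A \<in> carrier_mat n n" and ij: "i < n" "j < n"
  shows "(E * A * transpose_mat E) $$ (i, j) = (\<Sum>k<n. \<Sum>l<n. E $$ (i, k) * A $$ (k, l) * E $$ (j, l))"
proof -
  have EA: "E * A \<in> carrier_mat n n" using E A by simp
  have "(E * A * transpose_mat E) $$ (i, j) = (\<Sum>l<n. (E * A) $$ (i, l) * E $$ (j, l))"
    using EA E ij by (auto simp: scalar_prod_def atLeast0LessThan intro!: sum.cong)
  also have "\<dots> = (\<Sum>l<n. (\<Sum>k<n. E $$ (i, k) * A $$ (k, l)) * E $$ (j, l))"
    by (intro sum.cong refl) (use E A ij in \<open>simp add: scalar_prod_def atLeast0LessThan\<close>)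
  also have "\<dots> = (\<Sum>k<n. \<Sum>l<n. E $$ (i, k) * A $$ (k, l) * E $$ (j, l))"
    by (simp add: sum_distrib_right) (rule sum.swap)
  finally show ?thesis .
qed

lemma covar_carrier: "covar n Bm A t \<in> carrier_mat n n"
  unfolding covar_def by simp

lemma covar_entry:
  assumes Bm: "Bm \<in> carrier_mat n n" and A: "A \<in> carrier_mat n n" and ij: "i < n" "j < n"
  shows "covar n Bm A t $$ (i, j) = integral {0..t} (\<lambda>s. \<Sum>k<n. \<Sum>l<n.
      ex n (\<lambda>a b. Bm $$ (a, b)) (- s) k i * A $$ (k, l) * ex n (\<lambda>a b. Bm $$ (a, b)) (- s) l j)"
  unfolding covar_def using ij
  by (simp add: trip_entry[OF Emat_carrier[OF Bm] A ij] Emat_entry[OF Bm])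

lemma covar_symm:
  assumes Bm: "Bm \<in> carrier_mat n n" and A: "A \<in> carrier_mat n n" and sy: "symm n A"
  shows "symm n (covar n Bm A t)"
  unfolding symm_def
proof (intro allI impI)
  fix i j assume ij: "i < n" "j < n"
  let ?e = "ex n (\<lambda>a b. Bm $$ (a, b))"
  have "(\<lambda>s. \<Sum>k<n. \<Sum>l<n. ?e (- s) k i * A $$ (k, l) * ?e (- s) l j)
      = (\<lambda>s. \<Sum>l<n. \<Sum>k<n. ?e (- s) l j * A $$ (l, k) * ?e (- s) k i)"
  proof (rule ext)
    fix s
    have "(\<Sum>k<n. \<Sum>l<n. ?e (- s) k i * A $$ (k, l) * ?e (- s) l j)
        = (\<Sum>k<n. \<Sum>l<n. ?e (- s) l j * A $$ (l, k) * ?e (- s) k i)"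
      by (intro sum.cong refl) (use sy in \<open>auto simp: symm_def mult_ac\<close>)
    also have "\<dots> = (\<Sum>l<n. \<Sum>k<n. ?e (- s) l j * A $$ (l, k) * ?e (- s) k i)" by (rule sum.swap)
    finally show "(\<Sum>k<n. \<Sum>l<n. ?e (- s) k i * A $$ (k, l) * ?e (- s) l j)
        = (\<Sum>l<n. \<Sum>k<n. ?e (- s) l j * A $$ (l, k) * ?e (- s) k i)" .
  qed
  then show "covar n Bm A t $$ (i, j) = covar n Bm A t $$ (j, i)"
    unfolding covar_entry[OF Bm A ij] covar_entry[OF Bm A ij(2,1)] by simp
qed

lemma qf_covar:
  assumes Bm: "Bm \<in> carrier_mat n n" and A: "A \<in> carrier_mat n n"
  shows "qf n (covar n Bm A t) x = integral {0..t} (\<lambda>s. \<Sum>k<n. \<Sum>l<n.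
      A $$ (k, l) * Vf n (\<lambda>a b. Bm $$ (a, b)) s x k * Vf n (\<lambda>a b. Bm $$ (a, b)) s x l)"
proof -
  let ?e = "ex n (\<lambda>a b. Bm $$ (a, b))"
  define g where "g i j s = (\<Sum>k<n. \<Sum>l<n. ?e (- s) k i * A $$ (k, l) * ?e (- s) l j)" for i j s
  have gi: "(\<lambda>s. g i j s * x i * x j) integrable_on {0..t}" if "i < n" "j < n" for i j
    unfolding g_def
    by (intro integrable_continuous_real continuous_intros ex_cont_neg) (use that in auto)
  have "qf n (covar n Bm A t) x = (\<Sum>i<n. \<Sum>j<n. integral {0..t} (g i j) * x i * x j)"
    unfolding qf_def g_def by (intro sum.cong refl) (simp add: covar_entry[OF Bm A])
  also have "\<dots> = (\<Sum>i<n. \<Sum>j<n. integral {0..t} (\<lambda>s. g i j s * x i * x j))"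
    by (simp add: mult.assoc)
  also have "\<dots> = (\<Sum>i<n. integral {0..t} (\<lambda>s. \<Sum>j<n. g i j s * x i * x j))"
    by (intro sum.cong refl integral_sum[symmetric]) (use gi in auto)
  also have "\<dots> = integral {0..t} (\<lambda>s. \<Sum>i<n. \<Sum>j<n. g i j s * x i * x j)"
    by (intro integral_sum[symmetric] integrable_sum) (use gi in auto)
  also have "\<dots> = integral {0..t} (\<lambda>s. \<Sum>k<n. \<Sum>l<n.
      A $$ (k, l) * Vf n (\<lambda>a b. Bm $$ (a, b)) s x k * Vf n (\<lambda>a b. Bm $$ (a, b)) s x l)"
  proof (rule arg_cong[where f = "integral {0..t}"], rule ext)
    fix s
    have "(\<Sum>i<n. \<Sum>j<n. g i j s * x i * x j)
        = (\<Sum>i<n. \<Sum>j<n. \<Sum>k<n. \<Sum>l<n. A $$ (k, l) * (?e (- s) k i * x i) * (?e (- s) l j * x j))"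
      unfolding g_def by (simp add: sum_distrib_left sum_distrib_right mult_ac)
    also have "\<dots> = (\<Sum>k<n. \<Sum>l<n. \<Sum>i<n. \<Sum>j<n. A $$ (k, l) * (?e (- s) k i * x i) * (?e (- s) l j * x j))"
      by (rule sum4_swap)
    also have "\<dots> = (\<Sum>k<n. \<Sum>l<n. A $$ (k, l) * Vf n (\<lambda>a b. Bm $$ (a, b)) s x k * Vf n (\<lambda>a b. Bm $$ (a, b)) s x l)"
      unfolding Vf_def by (simp add: sum_distrib_left sum_distrib_right mult_ac)
    finally show "(\<Sum>i<n. \<Sum>j<n. g i j s * x i * x j) = (\<Sum>k<n. \<Sum>l<n.
      A $$ (k, l) * Vf n (\<lambda>a b. Bm $$ (a, b)) s x k * Vf n (\<lambda>a b. Bm $$ (a, b)) s x l)" .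
  qed
  finally show ?thesis .
qed


lemma sum_lt_restrict: "(m::nat) \<le> n \<Longrightarrow> (\<Sum>k<n. if k < m then f k else 0) = (\<Sum>k<m. (f k :: real))"
proof -
  assume "m \<le> n"
  then have e: "{..<n} \<inter> {..<m} = {..<m}" by (auto intro: less_le_trans)
  have "(\<Sum>k<n. if k < m then f k else 0) = (\<Sum>k<n. if k \<in> {..<m} then f k else 0)" by simp
  also have "\<dots> = sum f ({..<n} \<inter> {..<m})" by (rule sum.inter_restrict[symmetric]) simp
  finally show ?thesis unfolding e .
qed

lemma image_div_01: "0 < t \<Longrightarrow> (\<lambda>x. x / t) ` {0..t} = {0..(1::real)}"
proof
  assume t: "0 < t"
  show "(\<lambda>x. x / t) ` {0..t} \<subseteq> {0..1}" using t by auto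
  show "{0..1} \<subseteq> (\<lambda>x. x / t) ` {0..t}"
  proof
    fix u :: real assume u: "u \<in> {0..1}"
    have "t * u \<in> {0..t}" using u t by (auto simp: mult_le_cancel_left1)
    moreover have "u = (t * u) / t" using t by simp
    ultimately show "u \<in> (\<lambda>x. x / t) ` {0..t}" by blast
  qed
qed

context blocks
begin

definition Vq :: "(nat \<Rightarrow> nat \<Rightarrow> real) \<Rightarrow> real \<Rightarrow> (nat \<Rightarrow> real) \<Rightarrow> real" where
  "Vq F s x = (\<Sum>k<p 0. (Vf N F s x k)\<^sup>2)"

definition Kq :: "(nat \<Rightarrow> nat \<Rightarrow> real) \<Rightarrow> real \<Rightarrow> (nat \<Rightarrow> real) \<Rightarrow> real" where
  "Kq F t x = integral {0..t} (\<lambda>s. Vq F s x)"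

lemma p0N: "p 0 \<le> N"
  using off_mono[of 1 "Suc r"] off_r by (simp add: off_Suc off_0)

lemma Vq_cont: "continuous_on S (\<lambda>s. Vq F s x)"
  unfolding Vq_def using p0N by (intro continuous_intros Vf_cont) auto

lemma Vq_nonneg: "0 \<le> Vq F s x"
  unfolding Vq_def by (intro sum_nonneg) auto

lemma Kq_nonneg: "0 \<le> t \<Longrightarrow> 0 \<le> Kq F t x"
  unfolding Kq_def by (intro integral_nonneg integrable_continuous_real Vq_cont Vq_nonneg)

lemma B0c: "B0_of N B r p \<in> carrier_mat N N"
  unfolding B0_of_def by simp

lemma B0f_lam: "(\<lambda>a b. B0_of N B r p $$ (a, b)) = B0f"
  by (intro ext) (simp add: B0f_def)

lemma Bf_lam: "(\<lambda>a b. B $$ (a, b)) = Bf"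
  by (intro ext) (simp add: Bf_def)

lemma Ip0c: "Ip0 N (p 0) \<in> carrier_mat N N" unfolding Ip0_def by simp

lemma qf_Ctilde: "qf N (Ctilde N B r p t) x = Kq B0f t x"
proof -
  have "qf N (Ctilde N B r p t) x = integral {0..t} (\<lambda>s. \<Sum>k<N. \<Sum>l<N.
      Ip0 N (p 0) $$ (k, l) * Vf N B0f s x k * Vf N B0f s x l)"
    unfolding Ctilde_def qf_covar[OF B0c Ip0c] B0f_lam ..
  also have "\<dots> = Kq B0f t x"
    unfolding Kq_def
  proof (rule arg_cong[where f = "integral {0..t}"], rule ext)
    fix s
    have "(\<Sum>k<N. \<Sum>l<N. Ip0 N (p 0) $$ (k, l) * Vf N B0f s x k * Vf N B0f s x l)
        = (\<Sum>k<N. if k < p 0 then (Vf N B0f s x k)\<^sup>2 else 0)"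
    proof (rule sum.cong[OF refl])
      fix k assume k: "k \<in> {..<N}"
      have "(\<Sum>l<N. Ip0 N (p 0) $$ (k, l) * Vf N B0f s x k * Vf N B0f s x l)
          = (\<Sum>l<N. if l = k then (if k < p 0 then (Vf N B0f s x k)\<^sup>2 else 0) else 0)"
        by (rule sum.cong[OF refl]) (use k in \<open>auto simp: Ip0_def power2_eq_square\<close>)
      then show "(\<Sum>l<N. Ip0 N (p 0) $$ (k, l) * Vf N B0f s x k * Vf N B0f s x l)
          = (if k < p 0 then (Vf N B0f s x k)\<^sup>2 else 0)" using k by simp
    qed
    also have "\<dots> = Vq B0f s x" unfolding Vq_def by (rule sum_lt_restrict[OF p0N])
    finally show "(\<Sum>k<N. \<Sum>l<N. Ip0 N (p 0) $$ (k, l) * Vf N B0f s x k * Vf N B0f s x l) = Vq B0f s x" .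
  qed
  finally show ?thesis .
qed

lemma Ctilde_symm: "symm N (Ctilde N B r p t)"
  unfolding Ctilde_def by (rule covar_symm[OF B0c Ip0c]) (auto simp: symm_def Ip0_def)

lemma Ctilde_carrier: "Ctilde N B r p t \<in> carrier_mat N N"
  unfolding Ctilde_def by (rule covar_carrier)

lemma coef_c: "coef_mat N (p 0) a z0 \<in> carrier_mat N N" unfolding coef_mat_def by simp

lemma Cmat_carrier: "Cmat N B (p 0) a z0 t \<in> carrier_mat N N"
  unfolding Cmat_def by (rule covar_carrier)

lemma Cmat_symm:
  assumes "\<And>i j. i < p 0 \<Longrightarrow> j < p 0 \<Longrightarrow> a i j z0 = a j i z0"
  shows "symm N (Cmat N B (p 0) a z0 t)"
  unfolding Cmat_def by (rule covar_symm[OF Bc coef_c]) (use assms in \<open>auto simp: symm_def coef_mat_def\<close>)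

lemma qf_Cmat_bounds:
  assumes ell: "\<And>\<xi>. (1 / \<Lambda>) * (\<Sum>i<p 0. (\<xi> i)\<^sup>2) \<le> (\<Sum>i<p 0. \<Sum>j<p 0. a i j z0 * \<xi> i * \<xi> j)
       \<and> (\<Sum>i<p 0. \<Sum>j<p 0. a i j z0 * \<xi> i * \<xi> j) \<le> \<Lambda> * (\<Sum>i<p 0. (\<xi> i)\<^sup>2)"
    and t: "0 \<le> t"
  shows "(1 / \<Lambda>) * Kq Bf t x \<le> qf N (Cmat N B (p 0) a z0 t) x
       \<and> qf N (Cmat N B (p 0) a z0 t) x \<le> \<Lambda> * Kq Bf t x"
proof -
  define h where "h s = (\<Sum>i<p 0. \<Sum>j<p 0. a i j z0 * Vf N Bf s x i * Vf N Bf s x j)" for s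
  have q: "qf N (Cmat N B (p 0) a z0 t) x = integral {0..t} h"
  proof -
    have "qf N (Cmat N B (p 0) a z0 t) x = integral {0..t} (\<lambda>s. \<Sum>k<N. \<Sum>l<N.
      coef_mat N (p 0) a z0 $$ (k, l) * Vf N Bf s x k * Vf N Bf s x l)"
      unfolding Cmat_def qf_covar[OF Bc coef_c] Bf_lam ..
    also have "\<dots> = integral {0..t} h"
    proof (rule arg_cong[where f = "integral {0..t}"], rule ext)
      fix s
      have "(\<Sum>k<N. \<Sum>l<N. coef_mat N (p 0) a z0 $$ (k, l) * Vf N Bf s x k * Vf N Bf s x l)
          = (\<Sum>k<N. if k < p 0 then (\<Sum>l<p 0. a k l z0 * Vf N Bf s x k * Vf N Bf s x l) else 0)"
      proof (rule sum.cong[OF refl])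
        fix k assume k: "k \<in> {..<N}"
        have "(\<Sum>l<N. coef_mat N (p 0) a z0 $$ (k, l) * Vf N Bf s x k * Vf N Bf s x l)
            = (\<Sum>l<N. if l < p 0 then (if k < p 0 then a k l z0 * Vf N Bf s x k * Vf N Bf s x l else 0) else 0)"
          by (rule sum.cong[OF refl]) (use k in \<open>auto simp: coef_mat_def\<close>)
        also have "\<dots> = (\<Sum>l<p 0. (if k < p 0 then a k l z0 * Vf N Bf s x k * Vf N Bf s x l else 0))"
          by (rule sum_lt_restrict[OF p0N])
        finally show "(\<Sum>l<N. coef_mat N (p 0) a z0 $$ (k, l) * Vf N Bf s x k * Vf N Bf s x l)
          = (if k < p 0 then (\<Sum>l<p 0. a k l z0 * Vf N Bf s x k * Vf N Bf s x l) else 0)" by simp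
      qed
      also have "\<dots> = h s" unfolding h_def by (rule sum_lt_restrict[OF p0N])
      finally show "(\<Sum>k<N. \<Sum>l<N. coef_mat N (p 0) a z0 $$ (k, l) * Vf N Bf s x k * Vf N Bf s x l) = h s" .
    qed
    finally show ?thesis .
  qed
  have hc: "continuous_on {0..t} h" unfolding h_def using p0N
    by (intro continuous_intros Vf_cont) auto
  have vc: "continuous_on {0..t} (\<lambda>s. Vq Bf s x)" by (rule Vq_cont)
  have hb: "(1 / \<Lambda>) * Vq Bf s x \<le> h s \<and> h s \<le> \<Lambda> * Vq Bf s x" for s
    using ell[of "\<lambda>i. Vf N Bf s x i"] unfolding h_def Vq_def by (simp add: mult.assoc)
  have i1: "(\<lambda>s. (1 / \<Lambda>) * Vq Bf s x) integrable_on {0..t}"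
    by (intro integrable_continuous_real continuous_on_mult_left vc)
  have i2: "h integrable_on {0..t}" by (rule integrable_continuous_real[OF hc])
  have i3: "(\<lambda>s. \<Lambda> * Vq Bf s x) integrable_on {0..t}"
    by (intro integrable_continuous_real continuous_on_mult_left vc)
  have "(1 / \<Lambda>) * Kq Bf t x = integral {0..t} (\<lambda>s. (1 / \<Lambda>) * Vq Bf s x)"
    unfolding Kq_def by simp
  also have "\<dots> \<le> integral {0..t} h"
    by (rule integral_le[OF i1 i2]) (use hb in blast)
  finally have 1: "(1 / \<Lambda>) * Kq Bf t x \<le> integral {0..t} h" .
  have "integral {0..t} h \<le> integral {0..t} (\<lambda>s. \<Lambda> * Vq Bf s x)"
    by (rule integral_le[OF i2 i3]) (use hb in blast)
  also have "\<dots> = \<Lambda> * Kq Bf t x" unfolding Kq_def by simp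
  finally show ?thesis using 1 q by simp
qed

end


context blocks
begin

definition dw :: "real \<Rightarrow> nat \<Rightarrow> real" where "dw l i = l ^ (2 * bk i + 1)"

definition Blam :: "real \<Rightarrow> nat \<Rightarrow> nat \<Rightarrow> real" where
  "Blam l a b = l\<^sup>2 * dw l a / dw l b * Bf a b"

lemma dw_pos: "0 < l \<Longrightarrow> 0 < dw l i" unfolding dw_def by simp

lemma dw_nz: "0 < l \<Longrightarrow> dw l i \<noteq> 0" using dw_pos[of l i] by linarith

lemma Vf_conj:
  assumes l: "0 < l" and G: "\<And>a b. a < N \<Longrightarrow> b < N \<Longrightarrow> G a b = l\<^sup>2 * dw l a / dw l b * F a b"
    and k: "k < N"
  shows "Vf N F (l\<^sup>2 * u) x k = Vf N G u (\<lambda>i. dw l i * x i) k / dw l k"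
proof -
  have e: "ex N F (- (l\<^sup>2 * u)) k i = dw l i / dw l k * ex N G (- u) k i" if i: "i < N" for i
  proof -
    have "ex N G (- u) k i = dw l k / dw l i * ex N F (l\<^sup>2 * - u) k i"
      by (rule ex_conj[OF dw_nz[OF l] G k i])
    then show ?thesis using dw_pos[OF l, of i] dw_pos[OF l, of k] by (simp add: field_simps)
  qed
  have "Vf N F (l\<^sup>2 * u) x k = (\<Sum>i<N. dw l i / dw l k * ex N G (- u) k i * x i)"
    unfolding Vf_def by (intro sum.cong refl) (simp add: e)
  also have "\<dots> = (\<Sum>i<N. ex N G (- u) k i * (dw l i * x i)) / dw l k"
    by (simp add: sum_divide_distrib mult_ac)
  finally show ?thesis unfolding Vf_def .
qed

lemma B0_conj: "0 < l \<Longrightarrow> a < N \<Longrightarrow> b < N \<Longrightarrow> B0f a b = l\<^sup>2 * dw l a / dw l b * B0f a b"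
proof -
  assume l: "0 < l" and ab: "a < N" "b < N"
  show ?thesis
  proof (cases "bk b = Suc (bk a)")
    case True
    have "dw l b = l\<^sup>2 * dw l a" unfolding dw_def True by (simp add: power_add[symmetric] power2_eq_square[symmetric])
    then show ?thesis using dw_pos[OF l, of a] l by simp
  next
    case False then show ?thesis using ab by (simp add: B0f_eq)
  qed
qed

lemma Kq_scale:
  assumes t: "0 < t" and G: "\<And>a b. a < N \<Longrightarrow> b < N \<Longrightarrow> G a b = (sqrt t)\<^sup>2 * dw (sqrt t) a / dw (sqrt t) b * F a b"
  shows "Kq F t x = Kq G 1 (\<lambda>i. dw (sqrt t) i * x i)"
proof -
  define l where "l = sqrt t"
  have l: "0 < l" "l\<^sup>2 = t" using t unfolding l_def by auto
  define y where "y = (\<lambda>i. dw l i * x i)"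
  have vq: "Vq F (t * u) x = Vq G u y / t" for u
  proof -
    have "Vq F (t * u) x = (\<Sum>k<p 0. (Vf N G u y k / l)\<^sup>2)"
      unfolding Vq_def
    proof (intro sum.cong refl)
      fix k assume k: "k \<in> {..<p 0}"
      then have kN: "k < N" using p0N by auto
      have "dw l k = l" using bk_0[OF kN] k unfolding dw_def by simp
      then show "(Vf N F (t * u) x k)\<^sup>2 = (Vf N G u y k / l)\<^sup>2"
        using Vf_conj[OF l(1) G[unfolded l_def[symmetric]] kN, of u x] l(2) unfolding y_def by simp
    qed
    also have "\<dots> = Vq G u y / t" unfolding Vq_def using l by (simp add: power_divide sum_divide_distrib)
    finally show ?thesis .
  qed
  have "integral ((\<lambda>s. s / t) ` {0..t}) (\<lambda>u. Vq F (t * u) x) = (1 / \<bar>t\<bar>) *\<^sub>R integral {0..t} (\<lambda>s. Vq F s x)"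
    by (rule integral_stretch_real) (use t in auto)
  then have "integral {0..1} (\<lambda>u. Vq G u y * (1 / t)) = (1 / t) * Kq F t x"
    unfolding image_div_01[OF t] Kq_def vq using t by simp
  then have "Kq G 1 y * (1 / t) = (1 / t) * Kq F t x"
    unfolding Kq_def integral_mult_left .
  then show ?thesis using t unfolding y_def l_def by simp
qed

lemma Blam_bounds:
  assumes l: "0 < l" "l \<le> 1" and ab: "a < N" "b < N"
  shows "\<bar>Blam l a b - B0f a b\<bar> \<le> l\<^sup>2 * kb N Bf" "\<bar>Blam l a b\<bar> \<le> kb N Bf" "\<bar>B0f a b\<bar> \<le> kb N Bf"
proof -
  have K: "\<bar>Bf a b\<bar> \<le> kb N Bf" by (rule kb_bound[OF ab])
  have l2: "l\<^sup>2 \<le> 1" using l by (simp add: power_le_one)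
  consider "bk b = Suc (bk a)" | "bk b \<le> bk a" | "Suc (bk a) < bk b" by linarith
  then have "\<bar>Blam l a b - B0f a b\<bar> \<le> l\<^sup>2 * \<bar>Bf a b\<bar> \<and> \<bar>Blam l a b\<bar> \<le> \<bar>Bf a b\<bar> \<and> \<bar>B0f a b\<bar> \<le> \<bar>Bf a b\<bar>"
  proof cases
    case 1
    have "dw l b = l\<^sup>2 * dw l a" unfolding dw_def 1 by (simp add: power_add[symmetric] power2_eq_square[symmetric])
    then have "Blam l a b = Bf a b" unfolding Blam_def using dw_pos[OF l(1), of a] l by simp
    then show ?thesis using 1 ab by (simp add: B0f_eq)
  next
    case 2
    define q where "q = bk a - bk b"
    have "dw l a = l ^ (2 * q) * dw l b" unfolding dw_def q_def using 2
      by (simp add: power_add[symmetric]) (metis add_mult_distrib2 le_add_diff_inverse2 add.assoc add.commute)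
    then have Bl: "Blam l a b = l\<^sup>2 * l ^ (2 * q) * Bf a b"
      unfolding Blam_def using dw_pos[OF l(1), of b] by simp
    have lq: "l ^ (2 * q) \<le> 1" using l by (simp add: power_le_one)
    have lq0: "0 \<le> l ^ (2 * q)" using l by simp
    have "\<bar>Blam l a b\<bar> = l\<^sup>2 * (l ^ (2 * q) * \<bar>Bf a b\<bar>)" unfolding Bl using l by (simp add: abs_mult)
    also have "\<dots> \<le> l\<^sup>2 * (1 * \<bar>Bf a b\<bar>)"
      by (intro mult_left_mono mult_right_mono lq) auto
    finally have h: "\<bar>Blam l a b\<bar> \<le> l\<^sup>2 * \<bar>Bf a b\<bar>" by simp
    have "B0f a b = 0" using 2 ab by (simp add: B0f_eq)
    then show ?thesis using h l2 order_trans[OF h mult_right_mono[OF l2, of "\<bar>Bf a b\<bar>"]] by simp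
  next
    case 3
    have "Bf a b = 0" unfolding Bf_def by (rule B_zero[OF ab 3])
    then show ?thesis using 3 ab by (simp add: B0f_eq Blam_def)
  qed
  then show "\<bar>Blam l a b - B0f a b\<bar> \<le> l\<^sup>2 * kb N Bf" "\<bar>Blam l a b\<bar> \<le> kb N Bf" "\<bar>B0f a b\<bar> \<le> kb N Bf"
    using K l by (auto intro: order_trans mult_left_mono)
qed

definition Cx where "Cx = (\<Sum>m. inverse (fact m) * (2 * real N * kb N Bf) ^ m)"

lemma Vf_pert:
  assumes l: "0 < l" "l \<le> 1" and u: "u \<in> {0..1}" and k: "k < N"
  shows "\<bar>Vf N (Blam l) u y k - Vf N B0f u y k\<bar> \<le> l\<^sup>2 * kb N Bf * Cx * (\<Sum>i<N. \<bar>y i\<bar>)"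
proof -
  have "\<bar>Vf N (Blam l) u y k - Vf N B0f u y k\<bar> = \<bar>\<Sum>i<N. (ex N (Blam l) (- u) k i - ex N B0f (- u) k i) * y i\<bar>"
    unfolding Vf_def by (simp add: sum_subtractf[symmetric] algebra_simps)
  also have "\<dots> \<le> (\<Sum>i<N. \<bar>(ex N (Blam l) (- u) k i - ex N B0f (- u) k i) * y i\<bar>)" by (rule sum_abs)
  also have "\<dots> \<le> (\<Sum>i<N. l\<^sup>2 * kb N Bf * Cx * \<bar>y i\<bar>)"
  proof (rule sum_mono)
    fix i assume i: "i \<in> {..<N}"
    have "\<bar>ex N (Blam l) (- u) k i - ex N B0f (- u) k i\<bar> \<le> l\<^sup>2 * kb N Bf * Cx"
      unfolding Cx_def
      by (rule ex_diff[OF Blam_bounds(2)[OF l] Blam_bounds(3)[OF l] Blam_bounds(1)[OF l] kb_ge1 k])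
         (use i u in auto)
    then show "\<bar>(ex N (Blam l) (- u) k i - ex N B0f (- u) k i) * y i\<bar> \<le> l\<^sup>2 * kb N Bf * Cx * \<bar>y i\<bar>"
      by (simp add: abs_mult mult_right_mono)
  qed
  also have "\<dots> = l\<^sup>2 * kb N Bf * Cx * (\<Sum>i<N. \<bar>y i\<bar>)" by (simp add: sum_distrib_left)
  finally show ?thesis .
qed

lemma sum_abs_sq: "(\<Sum>i<N. \<bar>y i\<bar>)\<^sup>2 \<le> real N * (\<Sum>i<N. (y i)\<^sup>2)"
  using Cauchy_Schwarz_ineq_sum[of "\<lambda>_. 1" "\<lambda>i. \<bar>y i\<bar>" "{..<N}"] by simp

lemma Cx_nonneg: "0 \<le> Cx"
  unfolding Cx_def using kb_ge1[of N Bf]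
  by (intro suminf_nonneg summable_exp) auto

lemma Vq_pert:
  assumes l: "0 < l" "l \<le> 1" and u: "u \<in> {0..1}"
  defines "\<eta> \<equiv> real (p 0) * real N * (kb N Bf * Cx)\<^sup>2 * l ^ 4"
  shows "Vq B0f u y / 2 - \<eta> * (\<Sum>i<N. (y i)\<^sup>2) \<le> Vq (Blam l) u y
       \<and> Vq (Blam l) u y \<le> 2 * Vq B0f u y + 2 * \<eta> * (\<Sum>i<N. (y i)\<^sup>2)"
proof -
  define S where "S = (\<Sum>i<N. (y i)\<^sup>2)"
  define e where "e k = Vf N (Blam l) u y k - Vf N B0f u y k" for k
  have eb: "(e k)\<^sup>2 \<le> real N * (kb N Bf * Cx)\<^sup>2 * l ^ 4 * S" if k: "k < N" for k
  proof -
    have a: "\<bar>e k\<bar> \<le> l\<^sup>2 * kb N Bf * Cx * (\<Sum>i<N. \<bar>y i\<bar>)" unfolding e_def by (rule Vf_pert[OF l u k])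
    have "(e k)\<^sup>2 = \<bar>e k\<bar>\<^sup>2" by simp
    also have "\<dots> \<le> (l\<^sup>2 * kb N Bf * Cx * (\<Sum>i<N. \<bar>y i\<bar>))\<^sup>2"
      by (rule power_mono[OF a]) simp
    also have "\<dots> = (l\<^sup>2 * kb N Bf * Cx)\<^sup>2 * (\<Sum>i<N. \<bar>y i\<bar>)\<^sup>2" by (simp add: power_mult_distrib)
    also have "\<dots> \<le> (l\<^sup>2 * kb N Bf * Cx)\<^sup>2 * (real N * S)"
      unfolding S_def by (rule mult_left_mono[OF sum_abs_sq]) simp
    also have "\<dots> = real N * (kb N Bf * Cx)\<^sup>2 * l ^ 4 * S"
    proof -
      have l4: "(l\<^sup>2)\<^sup>2 = l ^ 4" by (simp flip: power_mult)
      show ?thesis by (simp add: power_mult_distrib l4 mult_ac)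
    qed
    finally show ?thesis .
  qed
  have se: "(\<Sum>k<p 0. (e k)\<^sup>2) \<le> \<eta> * S"
  proof -
    have "(\<Sum>k<p 0. (e k)\<^sup>2) \<le> (\<Sum>k<p 0. real N * (kb N Bf * Cx)\<^sup>2 * l ^ 4 * S)"
      by (rule sum_mono) (use eb p0N in auto)
    then show ?thesis unfolding \<eta>_def by simp
  qed
  have v: "Vf N (Blam l) u y k = Vf N B0f u y k + e k" for k unfolding e_def by simp
  have lo: "(Vf N B0f u y k)\<^sup>2 / 2 - (e k)\<^sup>2 \<le> (Vf N (Blam l) u y k)\<^sup>2" for k
  proof -
    have "(Vf N B0f u y k + e k)\<^sup>2 - ((Vf N B0f u y k)\<^sup>2 / 2 - (e k)\<^sup>2) = (Vf N B0f u y k + 2 * e k)\<^sup>2 / 2"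
      by (simp add: power2_eq_square algebra_simps)
    moreover have "0 \<le> (Vf N B0f u y k + 2 * e k)\<^sup>2 / 2" by simp
    ultimately show ?thesis unfolding v by linarith
  qed
  have hi: "(Vf N (Blam l) u y k)\<^sup>2 \<le> 2 * (Vf N B0f u y k)\<^sup>2 + 2 * (e k)\<^sup>2" for k
  proof -
    have "2 * (Vf N B0f u y k)\<^sup>2 + 2 * (e k)\<^sup>2 - (Vf N B0f u y k + e k)\<^sup>2 = (Vf N B0f u y k - e k)\<^sup>2"
      by (simp add: power2_eq_square algebra_simps)
    moreover have "0 \<le> (Vf N B0f u y k - e k)\<^sup>2" by simp
    ultimately show ?thesis unfolding v by linarith
  qed
  have "Vq B0f u y / 2 - (\<Sum>k<p 0. (e k)\<^sup>2) \<le> Vq (Blam l) u y"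
  proof -
    have "(\<Sum>k<p 0. (Vf N B0f u y k)\<^sup>2 / 2 - (e k)\<^sup>2) \<le> (\<Sum>k<p 0. (Vf N (Blam l) u y k)\<^sup>2)"
      by (rule sum_mono[OF lo])
    then show ?thesis unfolding Vq_def by (simp add: sum_subtractf sum_divide_distrib)
  qed
  moreover have "Vq (Blam l) u y \<le> 2 * Vq B0f u y + 2 * (\<Sum>k<p 0. (e k)\<^sup>2)"
  proof -
    have "(\<Sum>k<p 0. (Vf N (Blam l) u y k)\<^sup>2) \<le> (\<Sum>k<p 0. 2 * (Vf N B0f u y k)\<^sup>2 + 2 * (e k)\<^sup>2)"
      by (rule sum_mono[OF hi])
    then show ?thesis unfolding Vq_def by (simp add: sum.distrib sum_distrib_left)
  qed
  ultimately show ?thesis using se unfolding S_def by linarith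
qed

end


lemma poly_zero_coeffs:
  assumes z: "\<And>u. u \<in> {0..1::real} \<Longrightarrow> (\<Sum>m\<le>r. c m * u ^ m) = 0" and m: "m \<le> r"
  shows "c m = 0"
proof -
  define P where "P = (\<Sum>m\<le>r. monom (c m) m)"
  have pv: "poly P u = (\<Sum>m\<le>r. c m * u ^ m)" for u
    unfolding P_def by (simp add: poly_sum poly_monom)
  have "P = 0"
  proof (rule ccontr)
    assume "P \<noteq> 0"
    then have "finite {x. poly P x = 0}" by (rule poly_roots_finite)
    moreover have "{0..1::real} \<subseteq> {x. poly P x = 0}" using z pv by auto
    ultimately have "finite {0..1::real}" by (rule finite_subset[rotated])
    then show False using infinite_Icc[of "0::real" 1] by simp
  qed
  then have "coeff P m = 0" by simp
  moreover have "coeff P m = c m"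
    unfolding P_def coeff_sum coeff_monom using m by simp
  ultimately show ?thesis by simp
qed

context blocks
begin

lemma pw_B0_zero:
  assumes ij: "i < N" "j < N" and m: "r < m"
  shows "pw N B0f m i j = 0"
proof -
  have "pw N B0f m i j = (\<Sum>l<N. pw N B0f m i l * (if l = j then 1 else 0))"
  proof -
    have "(\<Sum>l<N. pw N B0f m i l * (if l = j then 1 else 0)) = (\<Sum>l<N. if l = j then pw N B0f m i l else 0)"
      by (rule sum.cong) auto
    then show ?thesis using ij by simp
  qed
  also have "\<dots> = itf B0f m (\<lambda>l. if l = j then 1 else 0) i" by (rule pw_itf[OF ij(1)])
  also have "\<dots> = 0" by (rule nilp[OF ij(1)]) (use m in simp)
  finally show ?thesis .
qed

lemma ex_B0_fin:
  assumes ij: "i < N" "j < N"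
  shows "ex N B0f s i j = (\<Sum>m\<le>r. s ^ m * pw N B0f m i j / fact m)"
  unfolding ex_def by (rule suminf_finite) (auto simp: pw_B0_zero[OF ij])

lemma Vf_B0_poly:
  assumes k: "k < N"
  shows "Vf N B0f u y k = (\<Sum>m\<le>r. ((-1) ^ m / fact m * itf B0f m y k) * u ^ m)"
proof -
  have "Vf N B0f u y k = (\<Sum>i<N. \<Sum>m\<le>r. (- u) ^ m / fact m * (pw N B0f m k i * y i))"
    unfolding Vf_def by (intro sum.cong refl) (simp add: ex_B0_fin[OF k] sum_distrib_right mult.assoc)
  also have "\<dots> = (\<Sum>m\<le>r. \<Sum>i<N. (- u) ^ m / fact m * (pw N B0f m k i * y i))" by (rule sum.swap)
  also have "\<dots> = (\<Sum>m\<le>r. (- u) ^ m / fact m * itf B0f m y k)"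
  proof (intro sum.cong refl)
    fix m
    have "(\<Sum>i<N. (- u) ^ m / fact m * (pw N B0f m k i * y i)) = (- u) ^ m / fact m * (\<Sum>i<N. pw N B0f m k i * y i)"
      by (rule sum_distrib_left[symmetric])
    then show "(\<Sum>i<N. (- u) ^ m / fact m * (pw N B0f m k i * y i)) = (- u) ^ m / fact m * itf B0f m y k"
      using pw_itf[OF k, of B0f m y] by simp
  qed
  also have "\<dots> = (\<Sum>m\<le>r. ((-1) ^ m / fact m * itf B0f m y k) * u ^ m)"
  proof (intro sum.cong refl)
    fix m
    have pm: "(- u) ^ m = (-1) ^ m * u ^ m" by (rule power_minus)
    show "(- u) ^ m / fact m * itf B0f m y k = ((-1) ^ m / fact m * itf B0f m y k) * u ^ m"
      unfolding pm by (simp add: field_simps)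
  qed
  finally show ?thesis .
qed

end


context blocks
begin

lemma Ctilde1_pdef: "pdef N (Ctilde N B r p 1)"
  unfolding pdef_def
proof (intro allI impI)
  fix y :: "nat \<Rightarrow> real" assume "\<exists>i<N. y i \<noteq> 0"
  then obtain i0 where i0: "i0 < N" "y i0 \<noteq> 0" by auto
  have q: "qf N (Ctilde N B r p 1) y = Kq B0f 1 y" by (rule qf_Ctilde)
  show "0 < qf N (Ctilde N B r p 1) y"
  proof (rule ccontr)
    assume "\<not> 0 < qf N (Ctilde N B r p 1) y"
    then have K0: "Kq B0f 1 y = 0" using Kq_nonneg[of 1 B0f y] q by simp
    have gc: "continuous_on {0..1} (\<lambda>u. Vq B0f u y)" by (rule Vq_cont)
    have gi: "((\<lambda>u. Vq B0f u y) has_integral 0) (cbox 0 1)"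
      using integrable_integral[OF integrable_continuous_real[OF gc]] K0
      unfolding Kq_def cbox_interval by simp
    have g0: "Vq B0f u y = 0" if u: "u \<in> {0..1}" for u
      by (rule has_integral_0_cbox_imp_0[OF _ _ gi])
         (use gc u Vq_nonneg in \<open>auto simp: cbox_interval box_real\<close>)
    have V0: "Vf N B0f u y k = 0" if u: "u \<in> {0..1}" and k: "k < p 0" for u k
    proof -
      have "(\<Sum>k<p 0. (Vf N B0f u y k)\<^sup>2) = 0" using g0[OF u] unfolding Vq_def .
      then have "\<forall>k\<in>{..<p 0}. (Vf N B0f u y k)\<^sup>2 = 0"
        by (subst sum_nonneg_eq_0_iff[symmetric]) auto
      then show ?thesis using k by simp
    qed
    have it0: "itf B0f m y k = 0" if m: "m \<le> r" and k: "k < p 0" for m k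
    proof -
      have kN: "k < N" using k p0N by simp
      have "(-1) ^ m / fact m * itf B0f m y k = 0"
      proof (rule poly_zero_coeffs[OF _ m])
        fix u :: real assume u: "u \<in> {0..1}"
        have e1: "Vf N B0f u y k = (\<Sum>m\<le>r. ((-1) ^ m / fact m * itf B0f m y k) * u ^ m)"
          by (rule Vf_B0_poly[OF kN])
        have e2: "Vf N B0f u y k = 0" by (rule V0[OF u k])
        show "(\<Sum>m\<le>r. ((-1) ^ m / fact m * itf B0f m y k) * u ^ m) = 0" using e1 e2 by linarith
      qed
      then show ?thesis by simp
    qed
    have "y i0 = 0"
    proof (rule chain_inj[of "bk i0" y i0])
      show "bk i0 \<le> r" using bk_prop[OF i0(1)] by simp
      show "\<And>i. i < N \<Longrightarrow> bk i = 0 \<Longrightarrow> itf B0f (bk i0) y i = 0"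
      proof -
        fix i assume i: "i < N" "bk i = 0"
        have "i < p 0" using bk_0[OF i(1)] i(2) by simp
        then show "itf B0f (bk i0) y i = 0" by (rule it0[OF bk_prop(1)[OF i0(1)]])
      qed
      show "i0 < N" by (rule i0(1))
    qed simp
    then show False using i0 by simp
  qed
qed

end


context blocks
begin

lemma Kq_pert:
  assumes l: "0 < l" "l \<le> 1"
  defines "\<eta> \<equiv> real (p 0) * real N * (kb N Bf * Cx)\<^sup>2 * l ^ 4"
  shows "Kq B0f 1 y / 2 - \<eta> * (\<Sum>i<N. (y i)\<^sup>2) \<le> Kq (Blam l) 1 y
       \<and> Kq (Blam l) 1 y \<le> 2 * Kq B0f 1 y + 2 * \<eta> * (\<Sum>i<N. (y i)\<^sup>2)"
proof -
  define S where "S = (\<Sum>i<N. (y i)\<^sup>2)"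
  have c0: "continuous_on {0..1} (\<lambda>u. Vq B0f u y)" "continuous_on {0..1} (\<lambda>u. Vq (Blam l) u y)"
    by (rule Vq_cont)+
  have i0: "(\<lambda>u. Vq B0f u y) integrable_on {0..1}" by (rule integrable_continuous_real[OF c0(1)])
  have i1: "(\<lambda>u. Vq (Blam l) u y) integrable_on {0..1}" by (rule integrable_continuous_real[OF c0(2)])
  have ia: "(\<lambda>u. Vq B0f u y / 2 - \<eta> * S) integrable_on {0..1}"
    by (intro integrable_continuous_real continuous_intros c0) auto
  have ib: "(\<lambda>u. 2 * Vq B0f u y + 2 * \<eta> * S) integrable_on {0..1}"
    by (intro integrable_continuous_real continuous_intros c0)
  have icon: "(\<lambda>u. C) integrable_on {0..1::real}" for C :: real
    by (rule integrable_continuous_real) (rule continuous_on_const)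
  have ka: "integral {0..1} (\<lambda>u. Vq B0f u y / 2 - \<eta> * S) = Kq B0f 1 y / 2 - \<eta> * S"
    using Henstock_Kurzweil_Integration.integral_diff[of "\<lambda>u. Vq B0f u y / 2" "{0..1::real}" "\<lambda>u. \<eta> * S"]
      i0 icon[of "\<eta> * S"] by (simp add: Kq_def)
  have kb: "integral {0..1} (\<lambda>u. 2 * Vq B0f u y + 2 * \<eta> * S) = 2 * Kq B0f 1 y + 2 * \<eta> * S"
    using Henstock_Kurzweil_Integration.integral_add[of "\<lambda>u. 2 * Vq B0f u y" "{0..1::real}" "\<lambda>u. 2 * \<eta> * S"]
      i0 icon[of "2 * \<eta> * S"] by (simp add: Kq_def)
  have pw: "Vq B0f u y / 2 - \<eta> * S \<le> Vq (Blam l) u y \<and> Vq (Blam l) u y \<le> 2 * Vq B0f u y + 2 * \<eta> * S"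
    if "u \<in> {0..1}" for u
    using Vq_pert[OF l that, of y] unfolding \<eta>_def S_def by simp
  have l1: "integral {0..1} (\<lambda>u. Vq B0f u y / 2 - \<eta> * S) \<le> Kq (Blam l) 1 y"
    unfolding Kq_def by (rule integral_le[OF ia i1]) (use pw in blast)
  have l2: "Kq (Blam l) 1 y \<le> integral {0..1} (\<lambda>u. 2 * Vq B0f u y + 2 * \<eta> * S)"
    unfolding Kq_def by (rule integral_le[OF i1 ib]) (use pw in blast)
  have "Kq B0f 1 y / 2 - \<eta> * S \<le> Kq (Blam l) 1 y" using l1 unfolding ka .
  moreover have "Kq (Blam l) 1 y \<le> 2 * Kq B0f 1 y + 2 * \<eta> * S" using l2 unfolding kb .
  ultimately show ?thesis unfolding S_def by simp
qed

lemma main_cmp: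
  "\<exists>c T. 0 < c \<and> 0 < T \<and> T \<le> 1 \<and> (\<forall>t x. 0 < t \<longrightarrow> t \<le> T \<longrightarrow>
      Kq B0f t x / 4 \<le> Kq Bf t x \<and> Kq Bf t x \<le> 3 * Kq B0f t x
      \<and> c * (\<Sum>i<N. (dw (sqrt t) i * x i)\<^sup>2) \<le> Kq B0f t x)"
proof -
  obtain c where c: "0 < c" "\<And>y. c * (\<Sum>i<N. (y i)\<^sup>2) \<le> qf N (Ctilde N B r p 1) y"
    using pd_lower[OF Ctilde_carrier Ctilde_symm Ctilde1_pdef] by blast
  have cK: "c * (\<Sum>i<N. (y i)\<^sup>2) \<le> Kq B0f 1 y" for y using c(2)[of y] qf_Ctilde by simp
  define D where "D = real (p 0) * real N * (kb N Bf * Cx)\<^sup>2"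
  have D0: "0 \<le> D" unfolding D_def by simp
  define T where "T = min 1 (c / (4 * D + 1))"
  have T0: "0 < T" unfolding T_def using c(1) D0 by simp
  have T1: "T \<le> 1" unfolding T_def by simp
  have "\<forall>t x. 0 < t \<longrightarrow> t \<le> T \<longrightarrow>
      Kq B0f t x / 4 \<le> Kq Bf t x \<and> Kq Bf t x \<le> 3 * Kq B0f t x
      \<and> c * (\<Sum>i<N. (dw (sqrt t) i * x i)\<^sup>2) \<le> Kq B0f t x"
  proof (intro allI impI conjI)
    fix t x assume t: "0 < t" "t \<le> T"
    define l where "l = sqrt t"
    have t1: "t \<le> 1" using t unfolding T_def by simp
    have l: "0 < l" "l \<le> 1" using t t1 unfolding l_def by auto
    have l4: "l ^ 4 = t\<^sup>2" unfolding l_def using t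
      by (metis less_imp_le power_mult real_sqrt_pow2 numeral_Bit0_eq_double mult_2_right power2_eq_square
          power_add numeral_Bit0)
    define y where "y = (\<lambda>i. dw l i * x i)"
    define S where "S = (\<Sum>i<N. (y i)\<^sup>2)"
    have S0: "0 \<le> S" unfolding S_def by (intro sum_nonneg) auto
    define \<eta> where "\<eta> = real (p 0) * real N * (kb N Bf * Cx)\<^sup>2 * l ^ 4"
    have \<eta>c: "\<eta> \<le> c / 4"
    proof -
      have "\<eta> = D * t\<^sup>2" unfolding \<eta>_def D_def l4 ..
      also have "\<dots> \<le> D * t" using D0 t t1 by (intro mult_left_mono) (auto simp: power2_eq_square mult_le_cancel_left1)
      also have "\<dots> \<le> D * (c / (4 * D + 1))"
        using t D0 unfolding T_def by (intro mult_left_mono) auto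
      also have "\<dots> \<le> c / 4"
        using D0 c(1) by (simp add: field_simps)
      finally show ?thesis .
    qed
    have KB: "Kq Bf t x = Kq (Blam l) 1 y"
      unfolding y_def l_def by (rule Kq_scale[OF t(1)]) (simp add: Blam_def)
    have K0: "Kq B0f t x = Kq B0f 1 y"
      unfolding y_def l_def by (rule Kq_scale[OF t(1)]) (rule B0_conj, use t in auto)
    have cy: "c * S \<le> Kq B0f 1 y" unfolding S_def by (rule cK)
    have pe: "Kq B0f 1 y / 2 - \<eta> * S \<le> Kq (Blam l) 1 y \<and> Kq (Blam l) 1 y \<le> 2 * Kq B0f 1 y + 2 * \<eta> * S"
      unfolding \<eta>_def S_def by (rule Kq_pert[OF l])
    have eS: "\<eta> * S \<le> c / 4 * S" using \<eta>c S0 by (rule mult_right_mono)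
    show "Kq B0f t x / 4 \<le> Kq Bf t x" unfolding KB K0 using pe eS cy by linarith
    show "Kq Bf t x \<le> 3 * Kq B0f t x" unfolding KB K0 using pe eS cy by linarith
    show "c * (\<Sum>i<N. (dw (sqrt t) i * x i)\<^sup>2) \<le> Kq B0f t x"
      unfolding K0 using cy unfolding S_def y_def l_def .
  qed
  then show ?thesis using c(1) T0 T1 by blast
qed

end


lemma covar_zero: "covar n Bm A 0 = 0\<^sub>m n n"
proof -
  have "integral {0..0::real} f = 0" for f :: "real \<Rightarrow> real"
    using integral_refl[of "0::real" f] by (simp add: cbox_interval)
  then show ?thesis by (intro eq_matI) (auto simp: covar_def)
qed

lemma qf_smult: "X \<in> carrier_mat n n \<Longrightarrow> qf n (c \<cdot>\<^sub>m X) x = c * qf n X x"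
  unfolding qf_def by (simp add: sum_distrib_left mult.assoc)

lemma symm_smult: "X \<in> carrier_mat n n \<Longrightarrow> symm n X \<Longrightarrow> symm n (c \<cdot>\<^sub>m X)"
  unfolding symm_def by simp

lemma qf_zero: "qf n (0\<^sub>m n n) x = 0" unfolding qf_def by simp

theorem lemma9:
  fixes N r :: nat and p :: "nat \<Rightarrow> nat" and B :: "real mat"
    and a :: "nat \<Rightarrow> nat \<Rightarrow> real Matrix.vec \<Rightarrow> real" and \<Lambda> :: real
  assumes bs: "block_structure N B r p"
    and p0: "1 \<le> p 0" "p 0 \<le> N"
    and Lam: "\<Lambda> \<ge> 1"
    and sym: "\<And>z i j. z \<in> carrier_vec (N + 1) \<Longrightarrow> i < p 0 \<Longrightarrow> j < p 0 \<Longrightarrow> a i j z = a j i z"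
    and ell: "\<And>z \<xi>. z \<in> carrier_vec (N + 1) \<Longrightarrow>
       (1 / \<Lambda>) * (\<Sum>i<p 0. (\<xi> i)\<^sup>2) \<le> (\<Sum>i<p 0. \<Sum>j<p 0. a i j z * \<xi> i * \<xi> j)
       \<and> (\<Sum>i<p 0. \<Sum>j<p 0. a i j z * \<xi> i * \<xi> j) \<le> \<Lambda> * (\<Sum>i<p 0. (\<xi> i)\<^sup>2)"
  shows "\<exists>M\<ge>1. \<exists>T>0. \<forall>x\<in>carrier_vec N. \<forall>z0\<in>carrier_vec (N + 1). \<forall>t\<in>{0..T}.
     (1 / M) * ((Ctilde N B r p t *\<^sub>v x) \<bullet> x) \<le> (Cmat N B (p 0) a z0 t *\<^sub>v x) \<bullet> x
   \<and> (Cmat N B (p 0) a z0 t *\<^sub>v x) \<bullet> x \<le> M * ((Ctilde N B r p t *\<^sub>v x) \<bullet> x)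
   \<and> (1 / M) * det (Ctilde N B r p t) \<le> det (Cmat N B (p 0) a z0 t)
   \<and> det (Cmat N B (p 0) a z0 t) \<le> M * det (Ctilde N B r p t)"
proof -
  interpret blocks N B r p by unfold_locales (rule bs)
  obtain c T where cT: "0 < c" "0 < T" "T \<le> 1" and main: "\<And>t x. 0 < t \<Longrightarrow> t \<le> T \<Longrightarrow>
      Kq B0f t x / 4 \<le> Kq Bf t x \<and> Kq Bf t x \<le> 3 * Kq B0f t x
      \<and> c * (\<Sum>i<N. (dw (sqrt t) i * x i)\<^sup>2) \<le> Kq B0f t x"
    using main_cmp by blast
  define M0 where "M0 = 4 * \<Lambda>"
  define M where "M = M0 ^ N"
  have N1: "1 \<le> N" using p0 by simp
  have M0: "1 \<le> M0" using Lam by (simp add: M0_def)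
  have MM0: "M0 \<le> M" unfolding M_def using power_increasing[OF N1 M0] by simp
  have M1: "1 \<le> M" using M0 MM0 by linarith
  have iM: "1 / M = (1 / M0) ^ N" unfolding M_def by (simp add: power_one_over)
  have iMM0: "1 / M \<le> 1 / M0" using M0 MM0 by (simp add: frac_le)
  have main_goal: "(1 / M) * ((Ctilde N B r p t *\<^sub>v x) \<bullet> x) \<le> (Cmat N B (p 0) a z0 t *\<^sub>v x) \<bullet> x
   \<and> (Cmat N B (p 0) a z0 t *\<^sub>v x) \<bullet> x \<le> M * ((Ctilde N B r p t *\<^sub>v x) \<bullet> x)
   \<and> (1 / M) * det (Ctilde N B r p t) \<le> det (Cmat N B (p 0) a z0 t)
   \<and> det (Cmat N B (p 0) a z0 t) \<le> M * det (Ctilde N B r p t)"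
    if x: "x \<in> carrier_vec N" and z0: "z0 \<in> carrier_vec (N + 1)" and t: "t \<in> {0..T}" for x z0 t
  proof -
    let ?Ct = "Ctilde N B r p t" and ?Cm = "Cmat N B (p 0) a z0 t"
    define xf where "xf = (\<lambda>i. x $ i)"
    have q1: "(?Ct *\<^sub>v x) \<bullet> x = qf N ?Ct xf" unfolding xf_def by (rule qf_vec[OF Ctilde_carrier x])
    have q2: "(?Cm *\<^sub>v x) \<bullet> x = qf N ?Cm xf" unfolding xf_def by (rule qf_vec[OF Cmat_carrier x])
    show ?thesis
    proof (cases "t = 0")
      case True
      have z1: "?Ct = 0\<^sub>m N N" unfolding True Ctilde_def by (rule covar_zero)
      have z2: "?Cm = 0\<^sub>m N N" unfolding True Cmat_def by (rule covar_zero)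
      have d0: "det (0\<^sub>m N N :: real mat) = 0" using N1 by simp
      have e1: "(?Ct *\<^sub>v x) \<bullet> x = 0" using q1 unfolding z1 qf_zero .
      have e2: "(?Cm *\<^sub>v x) \<bullet> x = 0" using q2 unfolding z2 qf_zero .
      have e3: "det ?Ct = 0" unfolding z1 d0 ..
      have e4: "det ?Cm = 0" unfolding z2 d0 ..
      show ?thesis unfolding e1 e2 e3 e4 by simp
    next
      case False
      then have t0: "0 < t" "t \<le> T" using t by auto
      have ellz: "\<And>\<xi>. (1 / \<Lambda>) * (\<Sum>i<p 0. (\<xi> i)\<^sup>2) \<le> (\<Sum>i<p 0. \<Sum>j<p 0. a i j z0 * \<xi> i * \<xi> j)
       \<and> (\<Sum>i<p 0. \<Sum>j<p 0. a i j z0 * \<xi> i * \<xi> j) \<le> \<Lambda> * (\<Sum>i<p 0. (\<xi> i)\<^sup>2)"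
        by (rule ell[OF z0])
      have Lpos: "0 < \<Lambda>" using Lam by simp
      have QB: "(1 / \<Lambda>) * Kq Bf t y \<le> qf N ?Cm y \<and> qf N ?Cm y \<le> \<Lambda> * Kq Bf t y" for y
        apply (rule qf_Cmat_bounds)
         apply (rule ellz)
        using t0 by simp
      have qa: "(1 / M0) * qf N ?Ct y \<le> qf N ?Cm y" for y
      proof -
        have b: "(1 / \<Lambda>) * Kq Bf t y \<le> qf N ?Cm y" using QB[of y] by simp
        have "Kq B0f t y / 4 \<le> Kq Bf t y" using main[OF t0] by blast
        then have "(1 / \<Lambda>) * (Kq B0f t y / 4) \<le> (1 / \<Lambda>) * Kq Bf t y"
          using Lpos by (intro mult_left_mono) auto
        then show ?thesis using b unfolding qf_Ctilde M0_def by simp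
      qed
      have qb: "qf N ?Cm y \<le> M0 * qf N ?Ct y" for y
      proof -
        have b: "qf N ?Cm y \<le> \<Lambda> * Kq Bf t y" using QB[of y] by simp
        have "Kq Bf t y \<le> 3 * Kq B0f t y" using main[OF t0] by blast
        then have h1: "\<Lambda> * Kq Bf t y \<le> \<Lambda> * (3 * Kq B0f t y)" using Lpos by (intro mult_left_mono) auto
        have "0 \<le> Kq B0f t y" using Kq_nonneg t0 by simp
        then have P0: "0 \<le> \<Lambda> * Kq B0f t y" using Lpos by simp
        have e3: "\<Lambda> * (3 * Kq B0f t y) = 3 * (\<Lambda> * Kq B0f t y)" by (simp add: mult_ac)
        have e4: "M0 * qf N ?Ct y = 4 * (\<Lambda> * Kq B0f t y)" unfolding qf_Ctilde M0_def by (simp add: mult_ac)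
        show ?thesis unfolding e4 using b h1 e3 P0 by linarith
      qed
      have qpos: "0 < qf N ?Ct y" if exy: "\<exists>i<N. y i \<noteq> 0" for y
      proof -
        obtain i0 where i0: "i0 < N" "y i0 \<noteq> 0" using exy by auto
        have "0 < (dw (sqrt t) i0 * y i0)\<^sup>2" using dw_pos[of "sqrt t" i0] t0 i0 by simp
        also have "\<dots> \<le> (\<Sum>i<N. (dw (sqrt t) i * y i)\<^sup>2)"
          by (rule member_le_sum) (use i0 in auto)
        finally have "0 < c * (\<Sum>i<N. (dw (sqrt t) i * y i)\<^sup>2)" using cT by simp
        also have "\<dots> \<le> Kq B0f t y" using main[OF t0] by blast
        finally show ?thesis unfolding qf_Ctilde .
      qed
      have QT0: "0 \<le> qf N ?Ct xf" unfolding qf_Ctilde using Kq_nonneg t0 by simp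
      have M00: "0 < 1 / M0" using M0 by simp
      have symCm: "symm N ?Cm" by (rule Cmat_symm) (use sym[OF z0] in auto)
      have d1: "0 < det ((1 / M0) \<cdot>\<^sub>m ?Ct) \<and> det ((1 / M0) \<cdot>\<^sub>m ?Ct) \<le> det ?Cm"
      proof (rule det_mono)
        show "(1 / M0) \<cdot>\<^sub>m ?Ct \<in> carrier_mat N N" by (rule smult_carrier_mat[OF Ctilde_carrier])
        show "?Cm \<in> carrier_mat N N" by (rule Cmat_carrier)
        show "symm N ((1 / M0) \<cdot>\<^sub>m ?Ct)" by (rule symm_smult[OF Ctilde_carrier Ctilde_symm])
        show "symm N ?Cm" by (rule symCm)
        show "pdef N ((1 / M0) \<cdot>\<^sub>m ?Ct)" unfolding pdef_def qf_smult[OF Ctilde_carrier]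
          using qpos M00 by simp
        show "qf N ((1 / M0) \<cdot>\<^sub>m ?Ct) y \<le> qf N ?Cm y" for y
          unfolding qf_smult[OF Ctilde_carrier] by (rule qa)
      qed
      have d2: "0 < det ((1 / M0) \<cdot>\<^sub>m ?Cm) \<and> det ((1 / M0) \<cdot>\<^sub>m ?Cm) \<le> det ?Ct"
      proof (rule det_mono)
        show "(1 / M0) \<cdot>\<^sub>m ?Cm \<in> carrier_mat N N" by (rule smult_carrier_mat[OF Cmat_carrier])
        show "?Ct \<in> carrier_mat N N" by (rule Ctilde_carrier)
        show "symm N ((1 / M0) \<cdot>\<^sub>m ?Cm)" by (rule symm_smult[OF Cmat_carrier symCm])
        show "symm N ?Ct" by (rule Ctilde_symm)
        show "pdef N ((1 / M0) \<cdot>\<^sub>m ?Cm)" unfolding pdef_def qf_smult[OF Cmat_carrier]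
        proof (intro allI impI)
          fix y :: "nat \<Rightarrow> real" assume "\<exists>i<N. y i \<noteq> 0"
          then have "0 < qf N ?Ct y" by (rule qpos)
          then have "0 < (1 / M0) * qf N ?Ct y" using M00 by simp
          also have "\<dots> \<le> qf N ?Cm y" by (rule qa)
          finally show "0 < 1 / M0 * qf N ?Cm y" using M00 by simp
        qed
        show "qf N ((1 / M0) \<cdot>\<^sub>m ?Cm) y \<le> qf N ?Ct y" for y
          unfolding qf_smult[OF Cmat_carrier] using qb[of y] M0 by (simp add: field_simps)
      qed
      have dimC: "dim_col ?Ct = N" "dim_col ?Cm = N"
        by (rule carrier_matD(2)[OF Ctilde_carrier]) (rule carrier_matD(2)[OF Cmat_carrier])
      have D1: "(1 / M) * det ?Ct \<le> det ?Cm" using d1 unfolding det_smult dimC iM by simp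
      have D2: "det ?Cm \<le> M * det ?Ct"
      proof -
        have "(1 / M0) ^ N * det ?Cm \<le> det ?Ct" using d2 unfolding det_smult dimC by simp
        then have "M0 ^ N * ((1 / M0) ^ N * det ?Cm) \<le> M0 ^ N * det ?Ct"
          using M0 by (intro mult_left_mono) auto
        moreover have "M0 ^ N * ((1 / M0) ^ N * det ?Cm) = det ?Cm"
          using M0 by (simp add: power_one_over field_simps)
        ultimately show ?thesis unfolding M_def by simp
      qed
      have Q1: "(1 / M) * qf N ?Ct xf \<le> qf N ?Cm xf"
        using mult_right_mono[OF iMM0 QT0] qa[of xf] by linarith
      have Q2: "qf N ?Cm xf \<le> M * qf N ?Ct xf"
        using mult_right_mono[OF MM0 QT0] qb[of xf] by linarith
      show ?thesis unfolding q1 q2 using Q1 Q2 D1 D2 by simp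
    qed
  qed
  show ?thesis
    by (intro exI[of _ M] conjI M1 exI[of _ T] cT(2) ballI main_goal)
qed


end
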